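(* Let $G$ be a connected affine algebraic group acting on an affine variety $X$, and let $X=\bigcup_{i=1}^n X_i$ be the decomposition of $X$ into irreducible components. Then the action $G\times X\to X$ is observable if and only if each restricted action $G\times X_i\to X_i$ ($i=1,\dots,n$) is observable.
   Context: $\Bbbk$ is algebraically closed; varieties are reduced. Since $G$ is connected, each irreducible component $X_i$ is $G$-stable. An action of $G$ on an affine variety $Y$ is called observable if for every nonzero $G$-stable ideal $I\subset\Bbbk[Y]$ one has $I^G\neq(0)$, where $I^G$ denotes the $G$-invariant elements of $I$ under $(g\cdot f)(y)=f(g^{-1}y)$. *)

theory Defs
  imports "HOL-Algebra.Group" "HOL-Library.FuncSet" "HOL-Computational_Algebra.Polynomial"
begin

text \<open>Concrete affine algebraic geometry over a field k.  Affine n-space is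
  modelled as functions 'v \<Rightarrow> 'k for a finite variable type 'v.\<close>

definition alg_closed :: "'k::field itself \<Rightarrow> bool" where
  "alg_closed _ \<longleftrightarrow> (\<forall>p :: 'k poly. degree p \<noteq> 0 \<longrightarrow> (\<exists>x. poly p x = 0))"

inductive poly_fun :: "(('v \<Rightarrow> 'k::comm_ring_1) \<Rightarrow> 'k) \<Rightarrow> bool" where
  pf_const: "poly_fun (\<lambda>x. c)"
| pf_var: "poly_fun (\<lambda>x. x i)"
| pf_add: "poly_fun p \<Longrightarrow> poly_fun q \<Longrightarrow> poly_fun (\<lambda>x. p x + q x)"
| pf_mult: "poly_fun p \<Longrightarrow> poly_fun q \<Longrightarrow> poly_fun (\<lambda>x. p x * q x)"

text \<open>Zariski closed subsets of k^'v (= affine varieties, reduced).\<close>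
definition zariski_closed :: "('v \<Rightarrow> 'k::comm_ring_1) set \<Rightarrow> bool" where
  "zariski_closed X \<longleftrightarrow> (\<exists>S. (\<forall>p\<in>S. poly_fun p) \<and> X = {x. \<forall>p\<in>S. p x = 0})"

definition zariski_irreducible :: "('v \<Rightarrow> 'k::comm_ring_1) set \<Rightarrow> bool" where
  "zariski_irreducible X \<longleftrightarrow> X \<noteq> {} \<and>
     (\<forall>A B. zariski_closed A \<longrightarrow> zariski_closed B \<longrightarrow> X \<subseteq> A \<union> B \<longrightarrow> X \<subseteq> A \<or> X \<subseteq> B)"

definition zariski_connected :: "('v \<Rightarrow> 'k::comm_ring_1) set \<Rightarrow> bool" where
  "zariski_connected X \<longleftrightarrow>
     \<not> (\<exists>A B. zariski_closed A \<and> zariski_closed B \<and> X \<subseteq> A \<union> B \<and> A \<inter> B \<inter> X = {}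
            \<and> A \<inter> X \<noteq> {} \<and> B \<inter> X \<noteq> {})"

definition irreducible_component ::
  "('v \<Rightarrow> 'k::comm_ring_1) set \<Rightarrow> ('v \<Rightarrow> 'k) set \<Rightarrow> bool" where
  "irreducible_component X C \<longleftrightarrow> C \<subseteq> X \<and> zariski_closed C \<and> zariski_irreducible C \<and>
     (\<forall>D. D \<subseteq> X \<and> zariski_closed D \<and> zariski_irreducible D \<and> C \<subseteq> D \<longrightarrow> D = C)"

definition morphism_on :: "('u \<Rightarrow> 'k::comm_ring_1) set \<Rightarrow> (('u \<Rightarrow> 'k) \<Rightarrow> ('v \<Rightarrow> 'k)) \<Rightarrow> bool" where
  "morphism_on X f \<longleftrightarrow> (\<forall>j. \<exists>p. poly_fun p \<and> (\<forall>x\<in>X. f x j = p x))"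

text \<open>Points of a product k^'u \<times> k^'v are identified with points of k^('u+'v).\<close>
definition pt_pair :: "('u \<Rightarrow> 'k) \<Rightarrow> ('v \<Rightarrow> 'k) \<Rightarrow> ('u + 'v \<Rightarrow> 'k)" where
  "pt_pair g x = case_sum g x"

definition prod_set :: "('u \<Rightarrow> 'k) set \<Rightarrow> ('v \<Rightarrow> 'k) set \<Rightarrow> ('u + 'v \<Rightarrow> 'k) set" where
  "prod_set A B = {pt_pair a b | a b. a \<in> A \<and> b \<in> B}"

definition morphism2_on ::
  "('u \<Rightarrow> 'k::comm_ring_1) set \<Rightarrow> ('v \<Rightarrow> 'k) set \<Rightarrow> (('u \<Rightarrow> 'k) \<Rightarrow> ('v \<Rightarrow> 'k) \<Rightarrow> ('w \<Rightarrow> 'k)) \<Rightarrow> bool" where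
  "morphism2_on A B f \<longleftrightarrow>
     (\<forall>j. \<exists>p. poly_fun p \<and> (\<forall>a\<in>A. \<forall>b\<in>B. f a b j = p (pt_pair a b)))"

definition affine_algebraic_group :: "('u \<Rightarrow> 'k::comm_ring_1) monoid \<Rightarrow> bool" where
  "affine_algebraic_group G \<longleftrightarrow> group G \<and> zariski_closed (carrier G) \<and>
     morphism2_on (carrier G) (carrier G) (\<lambda>g h. g \<otimes>\<^bsub>G\<^esub> h) \<and>
     morphism_on (carrier G) (\<lambda>g. inv\<^bsub>G\<^esub> g)"

definition algebraic_action ::
  "('u \<Rightarrow> 'k::comm_ring_1) monoid \<Rightarrow> ('v \<Rightarrow> 'k) set \<Rightarrow> (('u \<Rightarrow> 'k) \<Rightarrow> ('v \<Rightarrow> 'k) \<Rightarrow> ('v \<Rightarrow> 'k)) \<Rightarrow> bool" where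
  "algebraic_action G X a \<longleftrightarrow>
     (\<forall>g\<in>carrier G. \<forall>x\<in>X. a g x \<in> X) \<and>
     (\<forall>x\<in>X. a \<one>\<^bsub>G\<^esub> x = x) \<and>
     (\<forall>g\<in>carrier G. \<forall>h\<in>carrier G. \<forall>x\<in>X. a (g \<otimes>\<^bsub>G\<^esub> h) x = a g (a h x)) \<and>
     morphism2_on (carrier G) X a"

text \<open>Coordinate ring k[X] of a (reduced) affine variety: restrictions of polynomial
  functions to X.\<close>
definition coord_ring :: "('v \<Rightarrow> 'k::comm_ring_1) set \<Rightarrow> (('v \<Rightarrow> 'k) \<Rightarrow> 'k) set" where
  "coord_ring X = {restrict p X | p. poly_fun p}"

definition coord_zero :: "('v \<Rightarrow> 'k::comm_ring_1) set \<Rightarrow> (('v \<Rightarrow> 'k) \<Rightarrow> 'k)" where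
  "coord_zero X = restrict (\<lambda>x. 0) X"

definition coord_ideal :: "('v \<Rightarrow> 'k::comm_ring_1) set \<Rightarrow> (('v \<Rightarrow> 'k) \<Rightarrow> 'k) set \<Rightarrow> bool" where
  "coord_ideal X I \<longleftrightarrow> I \<subseteq> coord_ring X \<and> coord_zero X \<in> I \<and>
     (\<forall>f\<in>I. \<forall>h\<in>I. restrict (\<lambda>x. f x + h x) X \<in> I) \<and>
     (\<forall>f\<in>I. \<forall>h\<in>coord_ring X. restrict (\<lambda>x. h x * f x) X \<in> I)"

definition translate_fun ::
  "('u \<Rightarrow> 'k) monoid \<Rightarrow> ('v \<Rightarrow> 'k) set \<Rightarrow> (('u \<Rightarrow> 'k) \<Rightarrow> ('v \<Rightarrow> 'k) \<Rightarrow> ('v \<Rightarrow> 'k))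
     \<Rightarrow> ('u \<Rightarrow> 'k) \<Rightarrow> (('v \<Rightarrow> 'k) \<Rightarrow> 'k) \<Rightarrow> (('v \<Rightarrow> 'k) \<Rightarrow> 'k)" where
  "translate_fun G X a g f = restrict (\<lambda>y. f (a (inv\<^bsub>G\<^esub> g) y)) X"

definition G_stable where
  "G_stable G X a I \<longleftrightarrow> (\<forall>g\<in>carrier G. \<forall>f\<in>I. translate_fun G X a g f \<in> I)"

definition invariants where
  "invariants G X a I = {f\<in>I. \<forall>g\<in>carrier G. translate_fun G X a g f = f}"

definition observable ::
  "('u \<Rightarrow> 'k::comm_ring_1) monoid \<Rightarrow> ('v \<Rightarrow> 'k) set \<Rightarrow> (('u \<Rightarrow> 'k) \<Rightarrow> ('v \<Rightarrow> 'k) \<Rightarrow> ('v \<Rightarrow> 'k)) \<Rightarrow> bool" where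
  "observable G X a \<longleftrightarrow>
     (\<forall>I. coord_ideal X I \<and> G_stable G X a I \<and> I \<noteq> {coord_zero X}
          \<longrightarrow> invariants G X a I \<noteq> {coord_zero X})"

end

theory Submission
  imports Defs
begin

inductive pfv :: "'v set \<Rightarrow> (('v \<Rightarrow> 'k::comm_ring_1) \<Rightarrow> 'k) \<Rightarrow> bool" for V where
  pfv_const: "pfv V (\<lambda>x. c)"
| pfv_var: "i \<in> V \<Longrightarrow> pfv V (\<lambda>x. x i)"
| pfv_add: "pfv V p \<Longrightarrow> pfv V q \<Longrightarrow> pfv V (\<lambda>x. p x + q x)"
| pfv_mult: "pfv V p \<Longrightarrow> pfv V q \<Longrightarrow> pfv V (\<lambda>x. p x * q x)"

lemma pfv_mono: "pfv V p \<Longrightarrow> V \<subseteq> W \<Longrightarrow> pfv W p"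
  by (induction rule: pfv.induct) (auto intro: pfv.intros)

lemma poly_fun_pfv: "poly_fun p \<longleftrightarrow> pfv UNIV p"
proof
  show "poly_fun p \<Longrightarrow> pfv UNIV p"
    by (induction rule: poly_fun.induct) (auto intro: pfv.intros)
  show "pfv UNIV p \<Longrightarrow> poly_fun p"
    by (induction rule: pfv.induct) (auto intro: poly_fun.intros)
qed

lemma pfv_pow: "pfv V p \<Longrightarrow> pfv V (\<lambda>x. p x ^ n)"
proof (induction n)
  case 0 then show ?case using pfv_const[of V 1] by simp
next
  case (Suc n)
  then show ?case using pfv_mult[OF Suc(2) Suc(1)[OF Suc(2)]] by simp
qed

lemma pfv_empty: "pfv {} p \<Longrightarrow> \<exists>c. p = (\<lambda>x. c)"
  by (induction rule: pfv.induct) auto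

inductive_set igen :: "'v set \<Rightarrow> (('v \<Rightarrow> 'k::comm_ring_1) \<Rightarrow> 'k) set \<Rightarrow> (('v \<Rightarrow> 'k) \<Rightarrow> 'k) set"
  for V S where
  ig_zero: "(\<lambda>x. 0) \<in> igen V S"
| ig_base: "f \<in> S \<Longrightarrow> f \<in> igen V S"
| ig_add: "f \<in> igen V S \<Longrightarrow> g \<in> igen V S \<Longrightarrow> (\<lambda>x. f x + g x) \<in> igen V S"
| ig_mult: "pfv V h \<Longrightarrow> f \<in> igen V S \<Longrightarrow> (\<lambda>x. h x * f x) \<in> igen V S"

definition idl :: "'v set \<Rightarrow> (('v \<Rightarrow> 'k::comm_ring_1) \<Rightarrow> 'k) set \<Rightarrow> bool" where
  "idl V Q \<longleftrightarrow> (\<lambda>x. 0) \<in> Q \<and> (\<forall>f\<in>Q. \<forall>g\<in>Q. (\<lambda>x. f x + g x) \<in> Q) \<and>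
     (\<forall>h f. pfv V h \<longrightarrow> f \<in> Q \<longrightarrow> (\<lambda>x. h x * f x) \<in> Q)"

lemma igen_least: "idl V Q \<Longrightarrow> S \<subseteq> Q \<Longrightarrow> igen V S \<subseteq> Q"
proof
  fix f assume a: "idl V Q" "S \<subseteq> Q" and "f \<in> igen V S"
  from this(3) show "f \<in> Q" using a by (induction rule: igen.induct) (auto simp: idl_def)
qed

lemma idl_igen: "idl V (igen V S)"
  unfolding idl_def by (intro conjI ballI allI impI ig_zero ig_add ig_mult)

lemma igen_mono: "S \<subseteq> T \<Longrightarrow> igen V S \<subseteq> igen V T"
  by (rule igen_least[OF idl_igen]) (auto intro: ig_base)

lemma igen_trans: "S \<subseteq> igen V T \<Longrightarrow> igen V S \<subseteq> igen V T"
  by (rule igen_least[OF idl_igen])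

lemma igen_pfv: "f \<in> igen V S \<Longrightarrow> (\<forall>s\<in>S. pfv V s) \<Longrightarrow> pfv V f"
  by (induction rule: igen.induct) (auto intro: pfv.intros)

lemma igen_finite: "f \<in> igen V S \<Longrightarrow> \<exists>F. finite F \<and> F \<subseteq> S \<and> f \<in> igen V F"
proof (induction rule: igen.induct)
  case ig_zero
  have "(\<lambda>x. 0) \<in> igen V {}" by (rule igen.ig_zero)
  then show ?case by blast
next
  case (ig_base f)
  have "f \<in> igen V {f}" by (rule igen.ig_base) simp
  then show ?case using ig_base by (intro exI[of _ "{f}"]) simp
next
  case (ig_add f g)
  then obtain F1 F2 where F: "finite F1" "F1 \<subseteq> S" "f \<in> igen V F1" "finite F2" "F2 \<subseteq> S" "g \<in> igen V F2"
    by blast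
  have "f \<in> igen V (F1 \<union> F2)" "g \<in> igen V (F1 \<union> F2)"
    using igen_mono[of F1 "F1 \<union> F2" V] igen_mono[of F2 "F1 \<union> F2" V] F by auto
  then have "(\<lambda>x. f x + g x) \<in> igen V (F1 \<union> F2)" by (rule igen.ig_add)
  then show ?case using F by (intro exI[of _ "F1 \<union> F2"]) simp
next
  case (ig_mult h f)
  then obtain F where F: "finite F" "F \<subseteq> S" "f \<in> igen V F" by blast
  have "(\<lambda>x. h x * f x) \<in> igen V F" by (rule igen.ig_mult[OF ig_mult(1) F(3)])
  then show ?case using F by blast
qed

lemma igen_finite_set: "finite W \<Longrightarrow> W \<subseteq> igen V S \<Longrightarrow> \<exists>F. finite F \<and> F \<subseteq> S \<and> W \<subseteq> igen V F"
proof (induction rule: finite_induct)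
  case empty then show ?case by auto
next
  case (insert w W)
  then obtain F1 where "finite F1" "F1 \<subseteq> S" "W \<subseteq> igen V F1" by blast
  moreover have "w \<in> igen V S" using insert.prems by blast
  moreover obtain F2 where "finite F2" "F2 \<subseteq> S" "w \<in> igen V F2" using igen_finite[OF calculation(4)] by blast
  ultimately show ?case
    using igen_mono[of F1 "F1 \<union> F2" V] igen_mono[of F2 "F1 \<union> F2" V]
    by (intro exI[of _ "F1 \<union> F2"]) auto
qed

definition rep :: "'v set \<Rightarrow> 'v \<Rightarrow> (('v \<Rightarrow> 'k::comm_ring_1) \<Rightarrow> 'k) \<Rightarrow> nat \<Rightarrow> (('v \<Rightarrow> 'k) \<Rightarrow> 'k) \<Rightarrow> bool" where
  "rep V i f d c \<longleftrightarrow> pfv V c \<and> (\<exists>cs. (\<forall>j. pfv V (cs j)) \<and>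
      f = (\<lambda>x. (\<Sum>j<d. cs j x * x i ^ j) + c x * x i ^ d))"

lemma rep_I:
  assumes "pfv V c" "\<forall>j. pfv V (cs j)" "f = (\<lambda>x. (\<Sum>j<d. cs j x * x i ^ j) + c x * x i ^ d)"
  shows "rep V i f d c"
  unfolding rep_def
  apply (rule conjI, rule assms(1))
  apply (rule exI[of _ cs])
  apply (rule conjI, rule assms(2))
  apply (rule assms(3))
  done

lemma rep_E:
  assumes "rep V i f d c"
  obtains cs where "pfv V c" "\<forall>j. pfv V (cs j)" "f = (\<lambda>x. (\<Sum>j<d. cs j x * x i ^ j) + c x * x i ^ d)"
  using assms unfolding rep_def by (elim conjE exE) (rule that; assumption)

lemma rep_zero_fun: "rep V i (\<lambda>x. 0) d (\<lambda>x. 0)"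
  by (rule rep_I[where cs = "\<lambda>j x. 0"]) (simp_all add: pfv_const)

lemma rep_one: "rep V i (\<lambda>x. 1) 0 (\<lambda>x. 1)"
  by (rule rep_I[where cs = "\<lambda>j x. 0"]) (simp_all add: pfv_const)

lemma rep_add: "rep V i f d c \<Longrightarrow> rep V i g d c' \<Longrightarrow> rep V i (\<lambda>x. f x + g x) d (\<lambda>x. c x + c' x)"
proof -
  assume r1: "rep V i f d c" and r2: "rep V i g d c'"
  obtain cs where c: "pfv V c" "\<forall>j. pfv V (cs j)" "f = (\<lambda>x. (\<Sum>j<d. cs j x * x i ^ j) + c x * x i ^ d)"
    using r1 by (rule rep_E)
  obtain cs' where c': "pfv V c'" "\<forall>j. pfv V (cs' j)" "g = (\<lambda>x. (\<Sum>j<d. cs' j x * x i ^ j) + c' x * x i ^ d)"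
    using r2 by (rule rep_E)
  show ?thesis
  proof (rule rep_I[where cs = "\<lambda>j x. cs j x + cs' j x"])
    show "pfv V (\<lambda>x. c x + c' x)" using c(1) c'(1) by (rule pfv_add)
    show "\<forall>j. pfv V (\<lambda>x. cs j x + cs' j x)" using c(2) c'(2) by (simp add: pfv_add)
    show "(\<lambda>x. f x + g x) = (\<lambda>x. (\<Sum>j<d. (cs j x + cs' j x) * x i ^ j) + (c x + c' x) * x i ^ d)"
      unfolding c(3) c'(3) by (rule ext) (simp add: sum.distrib distrib_right add_ac)
  qed
qed

lemma rep_mult: "pfv V h \<Longrightarrow> rep V i f d c \<Longrightarrow> rep V i (\<lambda>x. h x * f x) d (\<lambda>x. h x * c x)"
proof -
  assume h: "pfv V h" and r: "rep V i f d c"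
  obtain cs where c: "pfv V c" "\<forall>j. pfv V (cs j)" "f = (\<lambda>x. (\<Sum>j<d. cs j x * x i ^ j) + c x * x i ^ d)"
    using r by (rule rep_E)
  show ?thesis
  proof (rule rep_I[where cs = "\<lambda>j x. h x * cs j x"])
    show "pfv V (\<lambda>x. h x * c x)" using h c(1) by (rule pfv_mult)
    show "\<forall>j. pfv V (\<lambda>x. h x * cs j x)" using h c(2) by (simp add: pfv_mult)
    show "(\<lambda>x. h x * f x) = (\<lambda>x. (\<Sum>j<d. (h x * cs j x) * x i ^ j) + (h x * c x) * x i ^ d)"
      unfolding c(3) by (rule ext) (simp add: sum_distrib_left distrib_left mult.assoc)
  qed
qed

lemma rep_shift1: "rep V i f d c \<Longrightarrow> rep V i (\<lambda>x. x i * f x) (Suc d) c"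
proof -
  assume r: "rep V i f d c"
  obtain cs where c: "pfv V c" "\<forall>j. pfv V (cs j)" "f = (\<lambda>x. (\<Sum>j<d. cs j x * x i ^ j) + c x * x i ^ d)"
    using r by (rule rep_E)
  define cs' where "cs' = case_nat (\<lambda>x. 0) cs"
  have s: "(\<Sum>j<Suc d. cs' j x * x i ^ j) = x i * (\<Sum>j<d. cs j x * x i ^ j)" for x
    unfolding cs'_def by (simp only: sum.lessThan_Suc_shift) (simp add: sum_distrib_left mult_ac)
  show ?thesis
  proof (rule rep_I[where cs = cs'])
    show "pfv V c" by (rule c(1))
    show "\<forall>j. pfv V (cs' j)" unfolding cs'_def using c(2) by (simp add: pfv_const split: nat.split)
    show "(\<lambda>x. x i * f x) = (\<lambda>x. (\<Sum>j<Suc d. cs' j x * x i ^ j) + c x * x i ^ Suc d)"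
      unfolding c(3) s by (rule ext) (simp add: distrib_left mult_ac)
  qed
qed

lemma rep_shift: "rep V i f d c \<Longrightarrow> rep V i (\<lambda>x. x i ^ k * f x) (d + k) c"
proof (induction k)
  case 0 then show ?case by simp
next
  case (Suc k)
  from rep_shift1[OF Suc(1)[OF Suc(2)]] show ?case by (simp add: mult.assoc)
qed

lemma rep_pad1: "rep V i f d c \<Longrightarrow> rep V i f (Suc d) (\<lambda>x. 0)"
proof -
  assume r: "rep V i f d c"
  obtain cs where c: "pfv V c" "\<forall>j. pfv V (cs j)" "f = (\<lambda>x. (\<Sum>j<d. cs j x * x i ^ j) + c x * x i ^ d)"
    using r by (rule rep_E)
  have s: "(\<Sum>j<d. (cs(d := c)) j x * x i ^ j) = (\<Sum>j<d. cs j x * x i ^ j)" for x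
    by (rule sum.cong) auto
  show ?thesis
  proof (rule rep_I[where cs = "cs(d := c)"])
    show "pfv V (\<lambda>x. 0)" by (rule pfv_const)
    show "\<forall>j. pfv V ((cs(d := c)) j)" using c(1,2) by simp
    show "f = (\<lambda>x. (\<Sum>j<Suc d. (cs(d := c)) j x * x i ^ j) + 0 * x i ^ Suc d)"
      unfolding c(3) by (rule ext) (simp add: s)
  qed
qed

lemma rep_pad: "rep V i f d c \<Longrightarrow> d \<le> e \<Longrightarrow> \<exists>c'. rep V i f e c'"
proof (induction e)
  case 0 then show ?case by auto
next
  case (Suc e)
  show ?case
  proof (cases "d = Suc e")
    case True then show ?thesis using Suc.prems(1) by blast
  next
    case False
    then have "d \<le> e" using Suc.prems(2) by simp
    then obtain c' where "rep V i f e c'" using Suc.IH Suc.prems(1) by blast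
    then show ?thesis using rep_pad1[of V i f e c'] by blast
  qed
qed

lemma rep_dec: "rep V i f (Suc d) (\<lambda>x. 0) \<Longrightarrow> \<exists>c'. rep V i f d c'"
proof -
  assume r: "rep V i f (Suc d) (\<lambda>x. 0)"
  obtain cs where c: "\<forall>j. pfv V (cs j)" "f = (\<lambda>x. (\<Sum>j<Suc d. cs j x * x i ^ j) + 0 * x i ^ Suc d)"
    using r by (rule rep_E)
  have "rep V i f d (cs d)"
  proof (rule rep_I[where cs = cs])
    show "pfv V (cs d)" using c(1) by simp
    show "\<forall>j. pfv V (cs j)" by (rule c(1))
    show "f = (\<lambda>x. (\<Sum>j<d. cs j x * x i ^ j) + cs d x * x i ^ d)"
      unfolding c(2) by (rule ext) simp
  qed
  then show ?thesis by (rule exI[of _ "cs d"])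
qed

lemma rep_zero: "rep V i f 0 (\<lambda>x. 0) \<Longrightarrow> f = (\<lambda>x. 0)"
  by (erule rep_E) simp

lemma rep_pfv: "rep V i f d c \<Longrightarrow> pfv V c"
  by (erule rep_E)


lemma rep_all:
  fixes g :: "('v \<Rightarrow> 'k::comm_ring_1) \<Rightarrow> 'k"
  assumes "pfv (insert i V) g"
  shows "\<exists>d c. rep V i g d c"
proof -
  define P :: "(('v \<Rightarrow> 'k) \<Rightarrow> 'k) set" where "P = {f. \<exists>d c. rep V i f d c}"
  have addP: "(\<lambda>x. f x + g x) \<in> P" if fg: "f \<in> P" "g \<in> P" for f g
  proof -
    obtain d1 c1 d2 c2 where r: "rep V i f d1 c1" "rep V i g d2 c2" using fg unfolding P_def by blast
    obtain c1' where r1: "rep V i f (max d1 d2) c1'" using rep_pad[OF r(1), of "max d1 d2"] by auto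
    obtain c2' where r2: "rep V i g (max d1 d2) c2'" using rep_pad[OF r(2), of "max d1 d2"] by auto
    show ?thesis using rep_add[OF r1 r2] unfolding P_def by blast
  qed
  have multV: "(\<lambda>x. h x * f x) \<in> P" if hf: "pfv V h" "f \<in> P" for h f
  proof -
    obtain d c where "rep V i f d c" using hf(2) unfolding P_def by blast
    from rep_mult[OF hf(1) this] show ?thesis unfolding P_def by blast
  qed
  have multx: "(\<lambda>x. x i * f x) \<in> P" if hf: "f \<in> P" for f
  proof -
    obtain d c where "rep V i f d c" using hf unfolding P_def by blast
    from rep_shift1[OF this] show ?thesis unfolding P_def by blast
  qed
  have main: "\<forall>f\<in>P. (\<lambda>x. f x * q x) \<in> P" if "pfv (insert i V) q" for q
    using that
  proof (induction rule: pfv.induct)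
    case (pfv_const c)
    show ?case
    proof
      fix f assume "f \<in> P"
      from multV[OF pfv.pfv_const[of V c] this] show "(\<lambda>x. f x * c) \<in> P" by (simp add: mult.commute)
    qed
  next
    case (pfv_var j)
    show ?case
    proof
      fix f assume f: "f \<in> P"
      show "(\<lambda>x. f x * x j) \<in> P"
      proof (cases "j = i")
        case True then show ?thesis using multx[OF f] by (simp add: mult.commute)
      next
        case False then have "j \<in> V" using pfv_var by simp
        from multV[OF pfv.pfv_var[OF this] f] show ?thesis by (simp add: mult.commute)
      qed
    qed
  next
    case (pfv_add p q)
    show ?case
    proof
      fix f assume f: "f \<in> P"
      from addP[OF bspec[OF pfv_add.IH(1) f] bspec[OF pfv_add.IH(2) f]]
      show "(\<lambda>x. f x * (p x + q x)) \<in> P" by (simp add: distrib_left)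
    qed
  next
    case (pfv_mult p q)
    show ?case
    proof
      fix f assume f: "f \<in> P"
      from bspec[OF pfv_mult.IH(2) bspec[OF pfv_mult.IH(1) f]]
      show "(\<lambda>x. f x * (p x * q x)) \<in> P" by (simp add: mult.assoc)
    qed
  qed
  have "(\<lambda>x. 1) \<in> P" using rep_one[of V i] unfolding P_def by auto
  have "\<forall>f\<in>P. (\<lambda>x. f x * g x) \<in> P" by (rule main) (rule assms)
  from bspec[OF this \<open>(\<lambda>x. 1) \<in> P\<close>] show ?thesis unfolding P_def by simp
qed

lemma hilbert:
  "finite V \<Longrightarrow> \<forall>S. (\<forall>s\<in>S. pfv V (s :: ('v \<Rightarrow> 'k::field) \<Rightarrow> 'k)) \<longrightarrow>
      (\<exists>F. finite F \<and> F \<subseteq> S \<and> S \<subseteq> igen V F)"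
proof (induction rule: finite_induct)
  case empty
  show ?case
  proof (intro allI impI)
    fix S :: "(('v \<Rightarrow> 'k) \<Rightarrow> 'k) set" assume S: "\<forall>s\<in>S. pfv {} s"
    show "\<exists>F. finite F \<and> F \<subseteq> S \<and> S \<subseteq> igen {} F"
    proof (cases "S \<subseteq> {\<lambda>x. 0}")
      case True then show ?thesis by (intro exI[of _ "{}"]) (auto intro: ig_zero)
    next
      case False
      then obtain s where s: "s \<in> S" "s \<noteq> (\<lambda>x. 0)" by auto
      have "pfv {} s" using S s(1) by blast
      from pfv_empty[OF this] obtain c where c: "s = (\<lambda>x. c)" by blast
      have c0: "c \<noteq> 0" using s(2) unfolding c by auto
      have "t \<in> igen {} {s}" if "t \<in> S" for t
      proof -
        have "pfv {} t" using S that by blast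
        from pfv_empty[OF this] obtain e where e: "t = (\<lambda>x. e)" by blast
        have "(\<lambda>x. (\<lambda>x. e / c) x * s x) \<in> igen {} {s}"
          by (rule ig_mult[OF pfv_const ig_base]) simp
        then show ?thesis using c0 unfolding e c by simp
      qed
      then show ?thesis using s by (intro exI[of _ "{s}"]) auto
    qed
  qed
next
  case (insert i V)
  show ?case
  proof (intro allI impI)
    fix S :: "(('v \<Rightarrow> 'k) \<Rightarrow> 'k) set" assume S: "\<forall>s\<in>S. pfv (insert i V) s"
    define I where "I = igen (insert i V) S"
    have I_pf: "\<forall>f\<in>I. pfv (insert i V) f"
    proof
      fix f assume "f \<in> I"
      then show "pfv (insert i V) f" unfolding I_def using S by (rule igen_pfv)
    qed
    have idlI: "idl (insert i V) I" unfolding I_def by (rule idl_igen)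
    define Lall where "Lall = {c. \<exists>f\<in>I. \<exists>e. rep V i f e c}"
    have "\<forall>s\<in>Lall. pfv V s"
    proof
      fix s assume "s \<in> Lall"
      then obtain f e where "rep V i f e s" unfolding Lall_def by blast
      then show "pfv V s" by (rule rep_pfv)
    qed
    then have "\<exists>F. finite F \<and> F \<subseteq> Lall \<and> Lall \<subseteq> igen V F" by (rule mp[OF insert.IH[THEN spec[of _ Lall]]])
    then obtain FL where FL: "finite FL" "FL \<subseteq> Lall" "Lall \<subseteq> igen V FL" by (elim exE conjE)
    have "\<forall>b\<in>FL. \<exists>fe. fst fe \<in> I \<and> rep V i (fst fe) (snd fe) b"
    proof
      fix b assume "b \<in> FL"
      then have "b \<in> Lall" using FL(2) by blast
      then obtain f e where "f \<in> I" "rep V i f e b" unfolding Lall_def by blast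
      then show "\<exists>fe. fst fe \<in> I \<and> rep V i (fst fe) (snd fe) b" by (intro exI[of _ "(f, e)"]) simp
    qed
    from bchoice[OF this] obtain we where we: "\<forall>b\<in>FL. fst (we b) \<in> I \<and> rep V i (fst (we b)) (snd (we b)) b"
      by blast
    define wf where "wf b = fst (we b)" for b
    define wd where "wd b = snd (we b)" for b
    have w: "wf b \<in> I" "rep V i (wf b) (wd b) b" if "b \<in> FL" for b
      using we that unfolding wf_def wd_def by auto
    define D where "D = Max (insert 0 (wd ` FL))"
    have wdD: "wd b \<le> D" if "b \<in> FL" for b
      unfolding D_def using FL(1) that by (intro Max_ge) auto
    define Le where "Le e = {c. \<exists>f\<in>I. rep V i f e c}" for e
    have Lepf: "\<forall>s\<in>Le e. pfv V s" for e
    proof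
      fix s assume "s \<in> Le e"
      then obtain f where "rep V i f e s" unfolding Le_def by blast
      then show "pfv V s" by (rule rep_pfv)
    qed
    have "\<forall>e. \<exists>F. finite F \<and> F \<subseteq> Le e \<and> Le e \<subseteq> igen V F"
    proof
      fix e show "\<exists>F. finite F \<and> F \<subseteq> Le e \<and> Le e \<subseteq> igen V F" by (rule mp[OF insert.IH[THEN spec[of _ "Le e"]] Lepf])
    qed
    from choice[OF this] obtain FLe where FLe0: "\<forall>e. finite (FLe e) \<and> FLe e \<subseteq> Le e \<and> Le e \<subseteq> igen V (FLe e)"
      by blast
    then have FLe: "\<And>e. finite (FLe e)" "\<And>e. FLe e \<subseteq> Le e" "\<And>e. Le e \<subseteq> igen V (FLe e)"
      by auto
    have "\<forall>eb. \<exists>f. snd eb \<in> FLe (fst eb) \<longrightarrow> f \<in> I \<and> rep V i f (fst eb) (snd eb)"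
    proof
      fix eb :: "nat \<times> (('v \<Rightarrow> 'k) \<Rightarrow> 'k)"
      show "\<exists>f. snd eb \<in> FLe (fst eb) \<longrightarrow> f \<in> I \<and> rep V i f (fst eb) (snd eb)"
      proof (cases "snd eb \<in> FLe (fst eb)")
        case True
        then have "snd eb \<in> Le (fst eb)" using FLe(2) by blast
        then show ?thesis unfolding Le_def by blast
      qed simp
    qed
    from choice[OF this] obtain wfe' where wfe': "\<forall>eb. snd eb \<in> FLe (fst eb) \<longrightarrow> wfe' eb \<in> I \<and> rep V i (wfe' eb) (fst eb) (snd eb)"
      by blast
    define wfe where "wfe e b = wfe' (e, b)" for e b
    have wfe: "\<forall>e. \<forall>b\<in>FLe e. wfe e b \<in> I \<and> rep V i (wfe e b) e b"
    proof (intro allI ballI)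
      fix e b assume "b \<in> FLe e"
      then show "wfe e b \<in> I \<and> rep V i (wfe e b) e b"
        using wfe'[THEN spec[of _ "(e, b)"]] unfolding wfe_def by simp
    qed
    define W where "W = wf ` FL \<union> (\<Union>e\<in>{..<D}. wfe e ` FLe e)"
    have finW: "finite W" unfolding W_def using FL(1) FLe(1) by auto
    have WI: "W \<subseteq> I" unfolding W_def using w wfe by auto
    have genWI: "igen (insert i V) W \<subseteq> I" by (rule igen_least[OF idlI WI])
    have Q: "\<exists>g\<in>igen (insert i V) W. rep V i g d c" if c: "c \<in> Le d" for d c
    proof -
      define Q where "Q = {c. \<exists>g\<in>igen (insert i V) W. rep V i g d c}"
      have QI: "c' \<in> Q" if "g' \<in> igen (insert i V) W" "rep V i g' d c'" for g' c'
        unfolding Q_def using that by blast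
      have idlQ: "idl V Q" unfolding idl_def
      proof (intro conjI ballI allI impI)
        show "(\<lambda>x. 0) \<in> Q" by (rule QI[OF ig_zero rep_zero_fun])
      next
        fix f g assume "f \<in> Q" "g \<in> Q"
        then obtain f1 g1 where fg: "f1 \<in> igen (insert i V) W" "rep V i f1 d f"
          "g1 \<in> igen (insert i V) W" "rep V i g1 d g" unfolding Q_def by blast
        show "(\<lambda>x. f x + g x) \<in> Q" by (rule QI[OF ig_add[OF fg(1) fg(3)] rep_add[OF fg(2) fg(4)]])
      next
        fix h :: "('v \<Rightarrow> 'k) \<Rightarrow> 'k" and f assume h: "pfv V h" and "f \<in> Q"
        then obtain f1 where f1: "f1 \<in> igen (insert i V) W" "rep V i f1 d f" unfolding Q_def by blast
        have h': "pfv (insert i V) h" using pfv_mono[OF h] by blast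
        show "(\<lambda>x. h x * f x) \<in> Q" by (rule QI[OF ig_mult[OF h' f1(1)] rep_mult[OF h f1(2)]])
      qed
      show ?thesis
      proof (cases "D \<le> d")
        case True
        have "FL \<subseteq> Q"
        proof
          fix b assume b: "b \<in> FL"
          have "(\<lambda>x. x i ^ (d - wd b) * wf b x) \<in> igen (insert i V) W"
            using b by (intro ig_mult pfv_pow pfv_var ig_base) (auto simp: W_def)
          moreover have "rep V i (\<lambda>x. x i ^ (d - wd b) * wf b x) d b"
            using rep_shift[OF w(2)[OF b], of "d - wd b"] wdD[OF b] True by simp
          ultimately show "b \<in> Q" by (rule QI)
        qed
        then have "igen V FL \<subseteq> Q" by (rule igen_least[OF idlQ])
        moreover have "c \<in> Lall" using c unfolding Le_def Lall_def by blast
        ultimately show ?thesis using FL(3) unfolding Q_def by blast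
      next
        case False
        have "FLe d \<subseteq> Q"
        proof
          fix b assume b: "b \<in> FLe d"
          have "wfe d b \<in> igen (insert i V) W"
            using b False by (intro ig_base) (auto simp: W_def)
          then show "b \<in> Q" using wfe b by (intro QI) auto
        qed
        then have "igen V (FLe d) \<subseteq> Q" by (rule igen_least[OF idlQ])
        then have "c \<in> Q" using FLe(3)[of d] c by blast
        then show ?thesis unfolding Q_def by blast
      qed
    qed
    have sub: "\<exists>g\<in>igen (insert i V) W. (\<lambda>x. f x + (-1) * g x) \<in> I \<and> rep V i (\<lambda>x. f x + (-1) * g x) d (\<lambda>x. 0)"
      if f: "f \<in> I" "rep V i f d c" for f d c
    proof -
      have "c \<in> Le d" using f unfolding Le_def by blast
      then obtain g where g: "g \<in> igen (insert i V) W" "rep V i g d c" using Q by blast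
      have "rep V i (\<lambda>x. f x + (-1) * g x) d (\<lambda>x. c x + (-1) * c x)"
        by (rule rep_add[OF f(2) rep_mult[OF pfv_const g(2)]])
      then have "rep V i (\<lambda>x. f x + (-1) * g x) d (\<lambda>x. 0)" by simp
      moreover have "(\<lambda>x. f x + (-1) * g x) \<in> I"
      proof -
        have "g \<in> I" using genWI g(1) by blast
        have add: "\<forall>f\<in>I. \<forall>g\<in>I. (\<lambda>x. f x + g x) \<in> I"
          using idlI unfolding idl_def by (elim conjE) assumption
        have mul: "\<forall>h f. pfv (insert i V) h \<longrightarrow> f \<in> I \<longrightarrow> (\<lambda>x. h x * f x) \<in> I"
          using idlI unfolding idl_def by (elim conjE) assumption
        have gm: "(\<lambda>x. (\<lambda>x. -1) x * g x) \<in> I"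
          using mul[rule_format, OF pfv_const \<open>g \<in> I\<close>] .
        show ?thesis using bspec[OF bspec[OF add f(1)] gm] by simp
      qed
      ultimately show ?thesis using g(1) by blast
    qed
    have main: "\<forall>f c. f \<in> I \<longrightarrow> rep V i f d c \<longrightarrow> f \<in> igen (insert i V) W" for d
    proof (induction d)
      case 0
      show ?case
      proof (intro allI impI)
        fix f c assume "f \<in> I" "rep V i f 0 c"
        then obtain g where g: "g \<in> igen (insert i V) W" "rep V i (\<lambda>x. f x + (-1) * g x) 0 (\<lambda>x. 0)"
          using sub by blast
        have "(\<lambda>x. f x + (-1) * g x) = (\<lambda>x. 0)" by (rule rep_zero[OF g(2)])
        then have "\<And>x. f x + (-1) * g x = 0" by (rule fun_cong[THEN trans]) simp
        then have "f = g" by (intro ext) (simp add: add_eq_0_iff2)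
        then show "f \<in> igen (insert i V) W" using g by simp
      qed
    next
      case (Suc d)
      show ?case
      proof (intro allI impI)
        fix f c assume "f \<in> I" "rep V i f (Suc d) c"
        then obtain g where g: "g \<in> igen (insert i V) W" "(\<lambda>x. f x + (-1) * g x) \<in> I"
          "rep V i (\<lambda>x. f x + (-1) * g x) (Suc d) (\<lambda>x. 0)"
          using sub by blast
        then obtain c' where "rep V i (\<lambda>x. f x + (-1) * g x) d c'" using rep_dec[OF g(3)] by blast
        then have "(\<lambda>x. f x + (-1) * g x) \<in> igen (insert i V) W" by (rule Suc.IH[rule_format, OF g(2)])
        from ig_add[OF this g(1)] show "f \<in> igen (insert i V) W" by simp
      qed
    qed
    have "I \<subseteq> igen (insert i V) W"
    proof
      fix f assume "f \<in> I"
      moreover obtain d c where "rep V i f d c" using rep_all[OF bspec[OF I_pf \<open>f \<in> I\<close>]] by blast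
      ultimately show "f \<in> igen (insert i V) W" by (rule main[rule_format])
    qed
    moreover obtain F where F: "finite F" "F \<subseteq> S" "W \<subseteq> igen (insert i V) F"
      using igen_finite_set[OF finW WI[unfolded I_def]] by blast
    moreover have "S \<subseteq> I" unfolding I_def by (auto intro: ig_base)
    ultimately show "\<exists>F. finite F \<and> F \<subseteq> S \<and> S \<subseteq> igen (insert i V) F"
      using igen_trans[OF F(3)] by (intro exI[of _ F]) blast
  qed
qed


abbreviation zset :: "(('v \<Rightarrow> 'k::comm_ring_1) \<Rightarrow> 'k) set \<Rightarrow> ('v \<Rightarrow> 'k) set" where
  "zset S \<equiv> {x. \<forall>p\<in>S. p x = 0}"

lemma closedI: "\<forall>p\<in>S. poly_fun p \<Longrightarrow> zariski_closed (zset S)"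
  unfolding zariski_closed_def by blast

lemma closedE:
  assumes "zariski_closed X"
  obtains S where "\<forall>p\<in>S. poly_fun p" "X = zset S"
  using assms unfolding zariski_closed_def by blast

lemma closed_UNIV: "zariski_closed (UNIV :: ('v \<Rightarrow> 'k::comm_ring_1) set)"
proof -
  have "(UNIV :: ('v \<Rightarrow> 'k) set) = zset {}" by simp
  then show ?thesis using closedI[of "{}"] by simp
qed

lemma closed_empty: "zariski_closed ({} :: ('v \<Rightarrow> 'k::comm_ring_1) set)"
proof -
  have "({} :: ('v \<Rightarrow> 'k) set) = zset {\<lambda>x. 1}" by simp
  moreover have "\<forall>p\<in>{\<lambda>x. 1 :: 'k}. poly_fun (p :: ('v \<Rightarrow> 'k) \<Rightarrow> 'k)" by (simp add: poly_fun.pf_const)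
  ultimately show ?thesis using closedI[of "{\<lambda>x. 1}"] by simp
qed

lemma closed_Int: "zariski_closed A \<Longrightarrow> zariski_closed B \<Longrightarrow> zariski_closed (A \<inter> B)"
proof -
  assume cA: "zariski_closed A" and cB: "zariski_closed B"
  obtain S where S: "\<forall>p\<in>S. poly_fun p" "A = zset S" using cA by (rule closedE)
  obtain T where T: "\<forall>p\<in>T. poly_fun p" "B = zset T" using cB by (rule closedE)
  note ST = S T
  have "A \<inter> B = zset (S \<union> T)" using ST by auto
  moreover have "\<forall>p\<in>S \<union> T. poly_fun p" using ST by auto
  ultimately show ?thesis using closedI[of "S \<union> T"] by simp
qed

lemma closed_Un:
  fixes A B :: "('v \<Rightarrow> 'k::field) set"
  shows "zariski_closed A \<Longrightarrow> zariski_closed B \<Longrightarrow> zariski_closed (A \<union> B)"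
proof -
  assume cA: "zariski_closed A" and cB: "zariski_closed B"
  obtain S where S: "\<forall>p\<in>S. poly_fun p" "A = zset S" using cA by (rule closedE)
  obtain T where T: "\<forall>p\<in>T. poly_fun p" "B = zset T" using cB by (rule closedE)
  note ST = S T
  define U where "U = {(\<lambda>x. s x * t x) | s t. s \<in> S \<and> t \<in> T}"
  have "A \<union> B = zset U"
  proof
    show "A \<union> B \<subseteq> zset U" unfolding U_def ST(2) ST(4) by auto
    show "zset U \<subseteq> A \<union> B"
    proof
      fix x assume x: "x \<in> zset U"
      show "x \<in> A \<union> B"
      proof (rule ccontr)
        assume "x \<notin> A \<union> B"
        then obtain s t where "s \<in> S" "s x \<noteq> 0" "t \<in> T" "t x \<noteq> 0" unfolding ST(2) ST(4) by auto
        moreover have "(\<lambda>x. s x * t x) \<in> U" unfolding U_def using calculation by blast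
        ultimately show False using x by auto
      qed
    qed
  qed
  moreover have "\<forall>p\<in>U. poly_fun p" unfolding U_def using ST by (auto intro!: poly_fun.pf_mult)
  ultimately show ?thesis using closedI[of U] by simp
qed

lemma closed_Union:
  fixes C :: "('v \<Rightarrow> 'k::field) set set"
  shows "finite C \<Longrightarrow> \<forall>A\<in>C. zariski_closed A \<Longrightarrow> zariski_closed (\<Union>C)"
proof (induction rule: finite_induct)
  case empty then show ?case using closed_empty by simp
next
  case (insert A C)
  then have "zariski_closed (\<Union>C)" "zariski_closed A" by simp_all
  then show ?case using closed_Un[of A "\<Union>C"] by simp
qed

lemma igen_vanish:
  assumes "f \<in> igen V F" "\<forall>p\<in>F. \<forall>x\<in>A. p x = 0"
  shows "\<forall>x\<in>A. f x = 0"
proof -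
  have "idl V {f. \<forall>x\<in>A. f x = 0}" unfolding idl_def by auto
  moreover have "F \<subseteq> {f. \<forall>x\<in>A. f x = 0}" using assms(2) by blast
  ultimately have "igen V F \<subseteq> {f. \<forall>x\<in>A. f x = 0}" by (rule igen_least)
  then show ?thesis using assms(1) by blast
qed

lemma hilbert_univ:
  fixes S :: "(('v::finite \<Rightarrow> 'k::field) \<Rightarrow> 'k) set"
  assumes "\<forall>s\<in>S. poly_fun s"
  shows "\<exists>F. finite F \<and> F \<subseteq> S \<and> S \<subseteq> igen UNIV F"
proof -
  have "\<forall>s\<in>S. pfv UNIV s" using assms poly_fun_pfv by blast
  then show ?thesis using hilbert[OF finite_UNIV, THEN spec[of _ S]] by blast
qed

definition crel :: "(('v \<Rightarrow> 'k::comm_ring_1) set \<times> ('v \<Rightarrow> 'k) set) set" where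
  "crel = {(A, B). zariski_closed A \<and> zariski_closed B \<and> A \<subset> B}"

lemma wf_crel: "wf (crel :: (('v::finite \<Rightarrow> 'k::field) set \<times> _) set)"
  unfolding wf_iff_no_infinite_down_chain
proof
  assume "\<exists>X. \<forall>n. (X (Suc n), X n) \<in> (crel :: (('v \<Rightarrow> 'k) set \<times> _) set)"
  then obtain X :: "nat \<Rightarrow> ('v \<Rightarrow> 'k) set" where X: "\<And>n. (X (Suc n), X n) \<in> crel" by blast
  have cl: "zariski_closed (X n)" for n using X[of n] unfolding crel_def by auto
  have strict: "X (Suc n) \<subset> X n" for n using X[of n] unfolding crel_def by auto
  have anti: "m \<le> n \<Longrightarrow> X n \<subseteq> X m" for m n
    using lift_Suc_antimono_le[of X m n] strict by auto
  define S where "S = {p. poly_fun p \<and> (\<exists>n. \<forall>x\<in>X n. p x = 0)}"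
  obtain F where F: "finite F" "F \<subseteq> S" "S \<subseteq> igen UNIV F"
    using hilbert_univ[of S] unfolding S_def by blast
  have "\<forall>p\<in>F. \<exists>n. \<forall>x\<in>X n. p x = 0" using F(2) unfolding S_def by blast
  from bchoice[OF this] obtain np where np: "\<forall>p\<in>F. \<forall>x\<in>X (np p). p x = 0" by blast
  define N where "N = Max (insert 0 (np ` F))"
  have "np p \<le> N" if "p \<in> F" for p unfolding N_def using F(1) that by (intro Max_ge) auto
  then have FN: "\<forall>p\<in>F. \<forall>x\<in>X N. p x = 0" using np anti by blast
  have SN: "\<forall>s\<in>S. \<forall>x\<in>X N. s x = 0"
  proof
    fix s assume "s \<in> S"
    then have "s \<in> igen UNIV F" using F(3) by blast
    then show "\<forall>x\<in>X N. s x = 0" using igen_vanish FN by blast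
  qed
  obtain T where T: "\<forall>p\<in>T. poly_fun p" "X (Suc N) = zset T" using cl[of "Suc N"] by (rule closedE)
  have "T \<subseteq> S" unfolding S_def using T by auto
  then have "X N \<subseteq> X (Suc N)" using SN T(2) by auto
  then show False using strict[of N] by auto
qed

lemma decomp:
  fixes X :: "('v::finite \<Rightarrow> 'k::field) set"
  shows "zariski_closed X \<Longrightarrow> \<exists>\<C>. finite \<C> \<and> (\<forall>C\<in>\<C>. zariski_closed C \<and> zariski_irreducible C \<and> C \<subseteq> X) \<and> \<Union>\<C> = X"
proof (induction X rule: wf_induct[OF wf_crel])
  case (1 X)
  show ?case
  proof (cases "X = {}")
    case True then show ?thesis by (intro exI[of _ "{}"]) auto
  next
    case False
    show ?thesis
    proof (cases "zariski_irreducible X")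
      case True then show ?thesis using "1.prems" by (intro exI[of _ "{X}"]) auto
    next
      case nirr: False
      then obtain A B where AB: "zariski_closed A" "zariski_closed B" "X \<subseteq> A \<union> B" "\<not> X \<subseteq> A" "\<not> X \<subseteq> B"
        using False unfolding zariski_irreducible_def by blast
      have cA: "zariski_closed (X \<inter> A)" and cB: "zariski_closed (X \<inter> B)"
        using closed_Int "1.prems" AB by blast+
      have "(X \<inter> A, X) \<in> crel" "(X \<inter> B, X) \<in> crel"
        unfolding crel_def using cA cB "1.prems" AB by auto
      then obtain C1 where
        C1: "finite C1" "\<forall>C\<in>C1. zariski_closed C \<and> zariski_irreducible C \<and> C \<subseteq> X \<inter> A" "\<Union>C1 = X \<inter> A"
        using "1.IH"[rule_format, of "X \<inter> A"] cA by blast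
      obtain C2 where
        C2: "finite C2" "\<forall>C\<in>C2. zariski_closed C \<and> zariski_irreducible C \<and> C \<subseteq> X \<inter> B" "\<Union>C2 = X \<inter> B"
        using "1.IH"[rule_format, of "X \<inter> B"] cB \<open>(X \<inter> B, X) \<in> crel\<close> by blast
      show ?thesis using C1 C2 AB(3) by (intro exI[of _ "C1 \<union> C2"]) auto
    qed
  qed
qed

lemma irr_sub_Union:
  fixes D :: "('v \<Rightarrow> 'k::field) set"
  shows "finite \<C> \<Longrightarrow> zariski_irreducible D \<Longrightarrow> \<forall>C\<in>\<C>. zariski_closed C \<Longrightarrow> D \<subseteq> \<Union>\<C> \<Longrightarrow> \<exists>C\<in>\<C>. D \<subseteq> C"
proof (induction rule: finite_induct)
  case empty then show ?case unfolding zariski_irreducible_def by auto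
next
  case (insert A \<C>)
  have "zariski_closed (\<Union>\<C>)" using insert closed_Union by auto
  moreover have "D \<subseteq> A \<union> \<Union>\<C>" using insert by auto
  ultimately have "D \<subseteq> A \<or> D \<subseteq> \<Union>\<C>" using insert.prems unfolding zariski_irreducible_def by auto
  then show ?case using insert by auto
qed

lemma comps:
  fixes X :: "('v::finite \<Rightarrow> 'k::field) set"
  assumes "zariski_closed X"
  shows "finite {K. irreducible_component X K}"
    and "\<Union>{K. irreducible_component X K} = X"
    and "\<And>D. D \<subseteq> X \<Longrightarrow> zariski_closed D \<Longrightarrow> zariski_irreducible D \<Longrightarrow> \<exists>K. irreducible_component X K \<and> D \<subseteq> K"
proof -
  obtain \<C> where C: "finite \<C>" "\<forall>C\<in>\<C>. zariski_closed C \<and> zariski_irreducible C \<and> C \<subseteq> X" "\<Union>\<C> = X"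
    using decomp[OF assms] by blast
  have inC: "\<exists>C\<in>\<C>. D \<subseteq> C" if "D \<subseteq> X" "zariski_irreducible D" for D
    using irr_sub_Union[OF C(1) that(2)] C that(1) by auto
  show sub: "\<exists>K. irreducible_component X K \<and> D \<subseteq> K"
    if D: "D \<subseteq> X" "zariski_closed D" "zariski_irreducible D" for D
  proof -
    obtain C0 where C0: "C0 \<in> \<C>" "D \<subseteq> C0" using inC D by blast
    define C' where "C' = {C\<in>\<C>. D \<subseteq> C}"
    have "finite C'" unfolding C'_def using C(1) by auto
    then obtain M where M: "M \<in> C'" "C0 \<subseteq> M" "\<forall>b\<in>C'. M \<subseteq> b \<longrightarrow> M = b"
      using finite_has_maximal2[of C' C0] C0 unfolding C'_def by auto
    have Mp: "M \<subseteq> X" "zariski_closed M" "zariski_irreducible M" "D \<subseteq> M"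
      using M(1) C(2) unfolding C'_def by auto
    have "irreducible_component X M"
      unfolding irreducible_component_def
    proof (intro conjI allI impI)
      show "M \<subseteq> X" "zariski_closed M" "zariski_irreducible M" by (fact Mp)+
      fix E assume E: "E \<subseteq> X \<and> zariski_closed E \<and> zariski_irreducible E \<and> M \<subseteq> E"
      then obtain C'' where C'': "C'' \<in> \<C>" "E \<subseteq> C''" using inC[of E] by blast
      have "D \<subseteq> C''" using Mp(4) E C''(2) by blast
      then have "C'' \<in> C'" unfolding C'_def using C''(1) by blast
      moreover have "M \<subseteq> C''" using E C''(2) by blast
      ultimately have "M = C''" using M(3) by blast
      then show "E = M" using E C''(2) by blast
    qed
    then show ?thesis using Mp(4) by blast
  qed
  have compC: "K \<in> \<C>" if K: "irreducible_component X K" for K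
  proof -
    have Kd: "K \<subseteq> X" "zariski_closed K" "zariski_irreducible K"
      and Kmax: "\<And>D. D \<subseteq> X \<and> zariski_closed D \<and> zariski_irreducible D \<and> K \<subseteq> D \<Longrightarrow> D = K"
      using K unfolding irreducible_component_def by blast+
    obtain C0 where C0: "C0 \<in> \<C>" "K \<subseteq> C0" using inC[OF Kd(1) Kd(3)] by blast
    have "C0 \<subseteq> X \<and> zariski_closed C0 \<and> zariski_irreducible C0 \<and> K \<subseteq> C0" using C0 C(2) by blast
    then have "C0 = K" by (rule Kmax)
    then show ?thesis using C0(1) by simp
  qed
  then have "{K. irreducible_component X K} \<subseteq> \<C>" by blast
  then show "finite {K. irreducible_component X K}" using C(1) finite_subset by blast
  show "\<Union>{K. irreducible_component X K} = X"
  proof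
    show "\<Union>{K. irreducible_component X K} \<subseteq> X" by (auto simp: irreducible_component_def)
    show "X \<subseteq> \<Union>{K. irreducible_component X K}"
    proof
      fix x assume "x \<in> X"
      then obtain C0 where "C0 \<in> \<C>" "x \<in> C0" using C(3) by blast
      then obtain K where "irreducible_component X K" "C0 \<subseteq> K" using sub C(2) by meson
      then show "x \<in> \<Union>{K. irreducible_component X K}" using \<open>x \<in> C0\<close> by blast
    qed
  qed
qed


lemma pf_comp:
  "poly_fun q \<Longrightarrow> (\<forall>j. poly_fun (P j)) \<Longrightarrow> poly_fun (\<lambda>x. q (\<lambda>j. P j x))"
proof (induction rule: poly_fun.induct)
  case (pf_const c) show ?case by (rule poly_fun.pf_const)
next
  case (pf_var i)
  have "(\<lambda>x. P i x) = P i" by simp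
  then show ?case using pf_var by simp
next
  case (pf_add p q) then show ?case using poly_fun.pf_add by blast
next
  case (pf_mult p q) then show ?case using poly_fun.pf_mult by blast
qed

lemma pf_pair_left: "poly_fun p \<Longrightarrow> poly_fun (\<lambda>x. p (pt_pair g x))"
proof -
  assume p: "poly_fun p"
  have "\<forall>j. poly_fun (\<lambda>x. case_sum g x j)"
  proof
    fix j show "poly_fun (\<lambda>x. case_sum g x j)"
      by (cases j) (simp_all add: poly_fun.pf_const poly_fun.pf_var)
  qed
  from pf_comp[OF p this] show ?thesis unfolding pt_pair_def by simp
qed

lemma pf_pair_right: "poly_fun p \<Longrightarrow> poly_fun (\<lambda>g. p (pt_pair g x))"
proof -
  assume p: "poly_fun p"
  have "\<forall>j. poly_fun (\<lambda>g. case_sum g x j)"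
  proof
    fix j show "poly_fun (\<lambda>g. case_sum g x j)"
      by (cases j) (simp_all add: poly_fun.pf_const poly_fun.pf_var)
  qed
  from pf_comp[OF p this] show ?thesis unfolding pt_pair_def by simp
qed

lemma irr_prod:
  fixes K :: "('v \<Rightarrow> 'k::field) set"
  assumes "zariski_irreducible K" "poly_fun p" "poly_fun q"
    "z1 \<in> K" "p z1 \<noteq> 0" "z2 \<in> K" "q z2 \<noteq> 0"
  shows "\<exists>z\<in>K. p z * q z \<noteq> 0"
proof (rule ccontr)
  assume "\<not> ?thesis"
  then have "K \<subseteq> zset {p} \<union> zset {q}" by auto
  moreover have "zariski_closed (zset {p})" using closedI[of "{p}"] assms(2) by simp
  moreover have "zariski_closed (zset {q})" using closedI[of "{q}"] assms(3) by simp
  ultimately have "K \<subseteq> zset {p} \<or> K \<subseteq> zset {q}"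
    using assms(1) unfolding zariski_irreducible_def by blast
  then show False using assms(4-7) by auto
qed

locale act_setting =
  fixes G :: "('u::finite \<Rightarrow> 'k::field) monoid"
    and X :: "('v::finite \<Rightarrow> 'k) set"
    and a :: "('u \<Rightarrow> 'k) \<Rightarrow> ('v \<Rightarrow> 'k) \<Rightarrow> ('v \<Rightarrow> 'k)"
  assumes grp: "group G"
    and clG: "zariski_closed (carrier G)"
    and conn: "zariski_connected (carrier G)"
    and clX: "zariski_closed X"
    and act: "algebraic_action G X a"
begin

lemma act_closed: "g \<in> carrier G \<Longrightarrow> x \<in> X \<Longrightarrow> a g x \<in> X"
  using act unfolding algebraic_action_def by blast

lemma act_one: "x \<in> X \<Longrightarrow> a \<one>\<^bsub>G\<^esub> x = x"
  using act unfolding algebraic_action_def by blast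

lemma act_mult: "g \<in> carrier G \<Longrightarrow> h \<in> carrier G \<Longrightarrow> x \<in> X \<Longrightarrow> a (g \<otimes>\<^bsub>G\<^esub> h) x = a g (a h x)"
  using act unfolding algebraic_action_def by blast

lemma inv_closed: "g \<in> carrier G \<Longrightarrow> inv\<^bsub>G\<^esub> g \<in> carrier G"
  using grp by (rule group.inv_closed)

lemma act_inv1: "g \<in> carrier G \<Longrightarrow> x \<in> X \<Longrightarrow> a (inv\<^bsub>G\<^esub> g) (a g x) = x"
proof -
  assume g: "g \<in> carrier G" and x: "x \<in> X"
  have "a (inv\<^bsub>G\<^esub> g) (a g x) = a (inv\<^bsub>G\<^esub> g \<otimes>\<^bsub>G\<^esub> g) x"
    using act_mult[OF inv_closed[OF g] g x] by simp
  also have "inv\<^bsub>G\<^esub> g \<otimes>\<^bsub>G\<^esub> g = \<one>\<^bsub>G\<^esub>" using group.l_inv[OF grp g] .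
  finally show ?thesis using act_one[OF x] by simp
qed

lemma act_inv2: "g \<in> carrier G \<Longrightarrow> x \<in> X \<Longrightarrow> a g (a (inv\<^bsub>G\<^esub> g) x) = x"
proof -
  assume g: "g \<in> carrier G" and x: "x \<in> X"
  have "a g (a (inv\<^bsub>G\<^esub> g) x) = a (g \<otimes>\<^bsub>G\<^esub> inv\<^bsub>G\<^esub> g) x"
    using act_mult[OF g inv_closed[OF g] x] by simp
  also have "g \<otimes>\<^bsub>G\<^esub> inv\<^bsub>G\<^esub> g = \<one>\<^bsub>G\<^esub>" using group.r_inv[OF grp g] .
  finally show ?thesis using act_one[OF x] by simp
qed

lemma act_poly_all: "\<exists>pa. \<forall>j. poly_fun (pa j) \<and> (\<forall>g\<in>carrier G. \<forall>x\<in>X. a g x j = pa j (pt_pair g x))"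
proof -
  have "\<forall>j. \<exists>p. poly_fun p \<and> (\<forall>g\<in>carrier G. \<forall>x\<in>X. a g x j = p (pt_pair g x))"
    using act unfolding algebraic_action_def morphism2_on_def by blast
  from choice[OF this] show ?thesis .
qed

lemma act_polyX:
  assumes "g \<in> carrier G"
  obtains P where "\<forall>j. poly_fun (P j)" "\<forall>x\<in>X. a g x = (\<lambda>j. P j x)"
proof -
  obtain pa where pa: "\<forall>j. poly_fun (pa j) \<and> (\<forall>g\<in>carrier G. \<forall>x\<in>X. a g x j = pa j (pt_pair g x))"
    using act_poly_all by blast
  define P where "P j = (\<lambda>x. pa j (pt_pair g x))" for j
  have "\<forall>j. poly_fun (P j)" unfolding P_def using pa pf_pair_left by blast
  moreover have "\<forall>x\<in>X. a g x = (\<lambda>j. P j x)"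
    unfolding P_def using pa assms by auto
  ultimately show ?thesis by (rule that)
qed

lemma act_polyG:
  assumes "x \<in> X"
  obtains P where "\<forall>j. poly_fun (P j)" "\<forall>g\<in>carrier G. a g x = (\<lambda>j. P j g)"
proof -
  obtain pa where pa: "\<forall>j. poly_fun (pa j) \<and> (\<forall>g\<in>carrier G. \<forall>x\<in>X. a g x j = pa j (pt_pair g x))"
    using act_poly_all by blast
  define P where "P j = (\<lambda>g. pa j (pt_pair g x))" for j
  have "\<forall>j. poly_fun (P j)" unfolding P_def using pa pf_pair_right by blast
  moreover have "\<forall>g\<in>carrier G. a g x = (\<lambda>j. P j g)"
    unfolding P_def using pa assms by auto
  ultimately show ?thesis by (rule that)
qed

definition pre :: "('u \<Rightarrow> 'k) \<Rightarrow> ('v \<Rightarrow> 'k) set \<Rightarrow> ('v \<Rightarrow> 'k) set" where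
  "pre h C = {x \<in> X. a h x \<in> C}"

lemma closed_pre:
  assumes h: "h \<in> carrier G" and C: "zariski_closed C"
  shows "zariski_closed (pre h C)"
proof -
  obtain SX where SX: "\<forall>p\<in>SX. poly_fun p" "X = zset SX" using clX by (rule closedE)
  obtain T where T: "\<forall>p\<in>T. poly_fun p" "C = zset T" using C by (rule closedE)
  obtain P where P: "\<forall>j. poly_fun (P j)" "\<forall>x\<in>X. a h x = (\<lambda>j. P j x)" using h by (rule act_polyX)
  define U where "U = SX \<union> {(\<lambda>x. t (\<lambda>j. P j x)) | t. t \<in> T}"
  have "\<forall>p\<in>U. poly_fun p" unfolding U_def using SX(1) T(1) pf_comp P(1) by blast
  moreover have "pre h C = zset U"
  proof
    show "pre h C \<subseteq> zset U"
    proof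
      fix x assume "x \<in> pre h C"
      then have x: "x \<in> X" "a h x \<in> C" unfolding pre_def by auto
      then have "\<forall>t\<in>T. t (\<lambda>j. P j x) = 0" using P(2) T(2) by auto
      then show "x \<in> zset U" using x(1) SX(2) unfolding U_def by auto
    qed
    show "zset U \<subseteq> pre h C"
    proof
      fix x assume x: "x \<in> zset U"
      then have xX: "x \<in> X" using SX(2) unfolding U_def by auto
      have "\<forall>t\<in>T. t (\<lambda>j. P j x) = 0" using x unfolding U_def by auto
      then have "a h x \<in> C" using P(2) xX T(2) by auto
      then show "x \<in> pre h C" using xX unfolding pre_def by auto
    qed
  qed
  ultimately show ?thesis using closedI[of U] by simp
qed

lemma pre_sub: "pre h C \<subseteq> X" unfolding pre_def by auto

lemma pre_mono: "C \<subseteq> D \<Longrightarrow> pre h C \<subseteq> pre h D" unfolding pre_def by auto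

lemma pre_pre1: "g \<in> carrier G \<Longrightarrow> D \<subseteq> X \<Longrightarrow> pre g (pre (inv\<^bsub>G\<^esub> g) D) = D"
  unfolding pre_def using act_closed act_inv1 inv_closed by auto

lemma pre_pre2: "g \<in> carrier G \<Longrightarrow> D \<subseteq> X \<Longrightarrow> pre (inv\<^bsub>G\<^esub> g) (pre g D) = D"
  unfolding pre_def using act_closed act_inv2 inv_closed by auto

lemma pre_in: "g \<in> carrier G \<Longrightarrow> x \<in> C \<Longrightarrow> C \<subseteq> X \<Longrightarrow> a (inv\<^bsub>G\<^esub> g) x \<in> pre g C"
  unfolding pre_def using act_closed act_inv2 inv_closed by auto

lemma irr_pre:
  assumes g: "g \<in> carrier G" and CX: "C \<subseteq> X" and irr: "zariski_irreducible C"
  shows "zariski_irreducible (pre g C)"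
  unfolding zariski_irreducible_def
proof (intro conjI allI impI)
  obtain x where "x \<in> C" using irr unfolding zariski_irreducible_def by blast
  then show "pre g C \<noteq> {}" using pre_in[OF g _ CX] by blast
next
  fix A B assume A: "zariski_closed A" and B: "zariski_closed B" and sub: "pre g C \<subseteq> A \<union> B"
  have gi: "inv\<^bsub>G\<^esub> g \<in> carrier G" using inv_closed[OF g] .
  have "C \<subseteq> pre (inv\<^bsub>G\<^esub> g) A \<union> pre (inv\<^bsub>G\<^esub> g) B"
  proof
    fix x assume x: "x \<in> C"
    then have "a (inv\<^bsub>G\<^esub> g) x \<in> A \<union> B" using pre_in[OF g x CX] sub by blast
    then show "x \<in> pre (inv\<^bsub>G\<^esub> g) A \<union> pre (inv\<^bsub>G\<^esub> g) B" using x CX unfolding pre_def by auto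
  qed
  moreover have "zariski_closed (pre (inv\<^bsub>G\<^esub> g) A)" "zariski_closed (pre (inv\<^bsub>G\<^esub> g) B)"
    using closed_pre[OF gi A] closed_pre[OF gi B] .
  ultimately have "C \<subseteq> pre (inv\<^bsub>G\<^esub> g) A \<or> C \<subseteq> pre (inv\<^bsub>G\<^esub> g) B"
    using irr unfolding zariski_irreducible_def by blast
  then show "pre g C \<subseteq> A \<or> pre g C \<subseteq> B"
  proof
    assume "C \<subseteq> pre (inv\<^bsub>G\<^esub> g) A"
    then have "pre g C \<subseteq> pre g (pre (inv\<^bsub>G\<^esub> g) A)" by (rule pre_mono)
    also have "\<dots> \<subseteq> A" unfolding pre_def using act_inv1[OF g] by auto
    finally show ?thesis by blast
  next
    assume "C \<subseteq> pre (inv\<^bsub>G\<^esub> g) B"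
    then have "pre g C \<subseteq> pre g (pre (inv\<^bsub>G\<^esub> g) B)" by (rule pre_mono)
    also have "\<dots> \<subseteq> B" unfolding pre_def using act_inv1[OF g] by auto
    finally show ?thesis by blast
  qed
qed

lemma comp_pre:
  assumes g: "g \<in> carrier G" and K: "irreducible_component X K"
  shows "irreducible_component X (pre g K)"
proof -
  have Kd: "K \<subseteq> X" "zariski_closed K" "zariski_irreducible K"
    and Kmax: "\<And>D. D \<subseteq> X \<and> zariski_closed D \<and> zariski_irreducible D \<and> K \<subseteq> D \<Longrightarrow> D = K"
    using K unfolding irreducible_component_def by blast+
  have gi: "inv\<^bsub>G\<^esub> g \<in> carrier G" using inv_closed[OF g] .
  show ?thesis unfolding irreducible_component_def
  proof (intro conjI allI impI)
    show "pre g K \<subseteq> X" by (rule pre_sub)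
    show "zariski_closed (pre g K)" by (rule closed_pre[OF g Kd(2)])
    show "zariski_irreducible (pre g K)" by (rule irr_pre[OF g Kd(1) Kd(3)])
    fix D assume D: "D \<subseteq> X \<and> zariski_closed D \<and> zariski_irreducible D \<and> pre g K \<subseteq> D"
    have "K = pre (inv\<^bsub>G\<^esub> g) (pre g K)" using pre_pre2[OF g Kd(1)] by simp
    also have "\<dots> \<subseteq> pre (inv\<^bsub>G\<^esub> g) D" using D by (intro pre_mono) blast
    finally have "pre (inv\<^bsub>G\<^esub> g) D \<subseteq> X \<and> zariski_closed (pre (inv\<^bsub>G\<^esub> g) D) \<and>
        zariski_irreducible (pre (inv\<^bsub>G\<^esub> g) D) \<and> K \<subseteq> pre (inv\<^bsub>G\<^esub> g) D"
      using pre_sub closed_pre[OF gi] irr_pre[OF gi] D by blast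
    then have "pre (inv\<^bsub>G\<^esub> g) D = K" by (rule Kmax)
    then have "pre g (pre (inv\<^bsub>G\<^esub> g) D) = pre g K" by simp
    then show "D = pre g K" using pre_pre1[OF g] D by simp
  qed
qed

end


context act_setting
begin

definition Gam :: "('v \<Rightarrow> 'k) set \<Rightarrow> ('v \<Rightarrow> 'k) set \<Rightarrow> ('u \<Rightarrow> 'k) set" where
  "Gam K K' = {h \<in> carrier G. \<forall>x\<in>K. a h x \<in> K'}"

lemma closed_Gam:
  assumes KX: "K \<subseteq> X" and K': "zariski_closed K'"
  shows "zariski_closed (Gam K K')"
proof -
  obtain SG where SG: "\<forall>p\<in>SG. poly_fun p" "carrier G = zset SG" using clG by (rule closedE)
  obtain T where T: "\<forall>p\<in>T. poly_fun p" "K' = zset T" using K' by (rule closedE)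
  have "\<forall>x\<in>K. \<exists>P. (\<forall>j. poly_fun (P j)) \<and> (\<forall>g\<in>carrier G. a g x = (\<lambda>j. P j g))"
  proof
    fix x assume "x \<in> K"
    then have "x \<in> X" using KX by blast
    then obtain P where "\<forall>j. poly_fun (P j)" "\<forall>g\<in>carrier G. a g x = (\<lambda>j. P j g)" by (rule act_polyG)
    then show "\<exists>P. (\<forall>j. poly_fun (P j)) \<and> (\<forall>g\<in>carrier G. a g x = (\<lambda>j. P j g))" by blast
  qed
  from bchoice[OF this] obtain Px where Px: "\<forall>x\<in>K. (\<forall>j. poly_fun (Px x j)) \<and> (\<forall>g\<in>carrier G. a g x = (\<lambda>j. Px x j g))"
    by blast
  define U where "U = SG \<union> {(\<lambda>h. t (\<lambda>j. Px x j h)) | x t. x \<in> K \<and> t \<in> T}"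
  have "\<forall>p\<in>U. poly_fun p"
  proof
    fix p assume "p \<in> U"
    then show "poly_fun p" unfolding U_def
    proof
      assume "p \<in> SG" then show ?thesis using SG(1) by blast
    next
      assume "p \<in> {(\<lambda>h. t (\<lambda>j. Px x j h)) | x t. x \<in> K \<and> t \<in> T}"
      then obtain x t where xt: "x \<in> K" "t \<in> T" "p = (\<lambda>h. t (\<lambda>j. Px x j h))" by blast
      have tp: "poly_fun t" using xt(2) T(1) by blast
      have Pp: "\<forall>j. poly_fun (Px x j)" using Px xt(1) by blast
      have "poly_fun (\<lambda>h. t (\<lambda>j. Px x j h))" using pf_comp[OF tp Pp] .
      then show ?thesis using xt(3) by simp
    qed
  qed
  moreover have "Gam K K' = zset U"
  proof
    show "Gam K K' \<subseteq> zset U"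
    proof
      fix h assume "h \<in> Gam K K'"
      then have h: "h \<in> carrier G" "\<forall>x\<in>K. a h x \<in> K'" unfolding Gam_def by auto
      have "\<forall>x\<in>K. \<forall>t\<in>T. t (\<lambda>j. Px x j h) = 0"
      proof (intro ballI)
        fix x t assume "x \<in> K" "t \<in> T"
        then have "t (a h x) = 0" using h(2) T(2) by blast
        moreover have "a h x = (\<lambda>j. Px x j h)" using Px \<open>x \<in> K\<close> h(1) by blast
        ultimately show "t (\<lambda>j. Px x j h) = 0" by simp
      qed
      then show "h \<in> zset U" using h(1) SG(2) unfolding U_def by auto
    qed
    show "zset U \<subseteq> Gam K K'"
    proof
      fix h assume hU: "h \<in> zset U"
      then have h: "h \<in> carrier G" using SG(2) unfolding U_def by auto
      have "a h x \<in> K'" if x: "x \<in> K" for x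
      proof -
        have "\<forall>t\<in>T. t (\<lambda>j. Px x j h) = 0"
        proof
          fix t assume t: "t \<in> T"
          have "(\<lambda>h. t (\<lambda>j. Px x j h)) \<in> U" unfolding U_def using x t by blast
          moreover have hU': "\<forall>p\<in>U. p h = 0" using hU by simp
          ultimately have "(\<lambda>h. t (\<lambda>j. Px x j h)) h = 0" by (rule bspec[rotated])
          then show "t (\<lambda>j. Px x j h) = 0" by simp
        qed
        moreover have "a h x = (\<lambda>j. Px x j h)" using Px x h by blast
        ultimately show ?thesis using T(2) by simp
      qed
      then show "h \<in> Gam K K'" using h unfolding Gam_def by auto
    qed
  qed
  ultimately show ?thesis using closedI[of U] by simp
qed

lemma comp_stable:
  assumes K: "irreducible_component X K" and g: "g \<in> carrier G" and x: "x \<in> K"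
  shows "a g x \<in> K"
proof -
  define \<K> where "\<K> = {K. irreducible_component X K}"
  have finK: "finite \<K>" unfolding \<K>_def using comps(1)[OF clX] .
  have KX: "K \<subseteq> X" and Kmax: "\<And>D. D \<subseteq> X \<and> zariski_closed D \<and> zariski_irreducible D \<and> K \<subseteq> D \<Longrightarrow> D = K"
    using K unfolding irreducible_component_def by blast+
  have KK: "K \<in> \<K>" unfolding \<K>_def using K by simp
  have clGam: "zariski_closed (Gam K K')" if "K' \<in> \<K>" for K'
    using closed_Gam[OF KX] that unfolding \<K>_def irreducible_component_def by blast
  have cover: "carrier G \<subseteq> (\<Union>K'\<in>\<K>. Gam K K')"
  proof
    fix h assume h: "h \<in> carrier G"
    have hi: "inv\<^bsub>G\<^esub> h \<in> carrier G" using inv_closed[OF h] .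
    have "irreducible_component X (pre (inv\<^bsub>G\<^esub> h) K)" by (rule comp_pre[OF hi K])
    moreover have "h \<in> Gam K (pre (inv\<^bsub>G\<^esub> h) K)"
      unfolding Gam_def pre_def using h KX act_closed act_inv1 by auto
    ultimately show "h \<in> (\<Union>K'\<in>\<K>. Gam K K')" unfolding \<K>_def by blast
  qed
  have uniq: "K1 = K2" if "K1 \<in> \<K>" "K2 \<in> \<K>" "h \<in> Gam K K1" "h \<in> Gam K K2" for K1 K2 h
  proof -
    have h: "h \<in> carrier G" using that(3) unfolding Gam_def by auto
    have "K1 = pre (inv\<^bsub>G\<^esub> h) K" if K1: "K1 \<in> \<K>" "h \<in> Gam K K1" for K1
    proof -
      have c1: "irreducible_component X (pre h K1)" using comp_pre[OF h] K1(1) unfolding \<K>_def by simp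
      have "K \<subseteq> pre h K1" using K1(2) KX unfolding Gam_def pre_def by auto
      then have "pre h K1 = K" using c1 unfolding irreducible_component_def using Kmax by blast
      then have "pre (inv\<^bsub>G\<^esub> h) (pre h K1) = pre (inv\<^bsub>G\<^esub> h) K" by simp
      moreover have "K1 \<subseteq> X" using K1(1) unfolding \<K>_def irreducible_component_def by blast
      ultimately show ?thesis using pre_pre2[OF h] by simp
    qed
    then show ?thesis using that by metis
  qed
  define B where "B = (\<Union>K'\<in>\<K> - {K}. Gam K K')"
  have clB: "zariski_closed B" unfolding B_def
    by (rule closed_Union) (use finK clGam in auto)
  have clA: "zariski_closed (Gam K K)" by (rule clGam[OF KK])
  have oneA: "\<one>\<^bsub>G\<^esub> \<in> Gam K K" unfolding Gam_def using KX act_one monoid.one_closed[OF group.is_monoid[OF grp]] by auto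
  have "carrier G \<subseteq> Gam K K \<union> B" using cover KK unfolding B_def by blast
  moreover have "Gam K K \<inter> B \<inter> carrier G = {}" unfolding B_def using uniq KK by blast
  moreover have "Gam K K \<inter> carrier G \<noteq> {}" using oneA monoid.one_closed[OF group.is_monoid[OF grp]] by blast
  ultimately have "B \<inter> carrier G = {}"
    using conn clA clB unfolding zariski_connected_def by blast
  then have "g \<in> Gam K K" using g cover KK unfolding B_def by blast
  then show ?thesis using x unfolding Gam_def by blast
qed

end


lemma cr_E:
  assumes "f \<in> coord_ring Y"
  obtains p where "poly_fun p" "f = restrict p Y"
  using assms unfolding coord_ring_def by blast

lemma cr_poly: "poly_fun p \<Longrightarrow> restrict p Y \<in> coord_ring Y"
  unfolding coord_ring_def by blast

lemma cr_out: "f \<in> coord_ring Y \<Longrightarrow> y \<notin> Y \<Longrightarrow> f y = undefined"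
  by (erule cr_E) simp

lemma cr_eqI: "f \<in> coord_ring Y \<Longrightarrow> g \<in> coord_ring Y \<Longrightarrow> (\<And>y. y \<in> Y \<Longrightarrow> f y = g y) \<Longrightarrow> f = g"
  by (rule ext) (metis cr_out)

lemma cr_zero: "coord_zero Y \<in> coord_ring Y"
  unfolding coord_zero_def by (rule cr_poly) (rule poly_fun.pf_const)

lemma cr_nonzero: "f \<in> coord_ring Y \<Longrightarrow> f \<noteq> coord_zero Y \<Longrightarrow> \<exists>y\<in>Y. f y \<noteq> 0"
proof (rule ccontr)
  assume f: "f \<in> coord_ring Y" "f \<noteq> coord_zero Y" and "\<not> (\<exists>y\<in>Y. f y \<noteq> 0)"
  then have "\<And>y. y \<in> Y \<Longrightarrow> f y = coord_zero Y y" unfolding coord_zero_def by simp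
  then have "f = coord_zero Y" using cr_eqI[OF f(1) cr_zero] by blast
  then show False using f(2) by simp
qed

lemma cr_add: "f \<in> coord_ring Y \<Longrightarrow> g \<in> coord_ring Y \<Longrightarrow> restrict (\<lambda>x. f x + g x) Y \<in> coord_ring Y"
proof -
  assume "f \<in> coord_ring Y" "g \<in> coord_ring Y"
  then obtain p q where pq: "poly_fun p" "f = restrict p Y" "poly_fun q" "g = restrict q Y"
    by (metis cr_E)
  have "restrict (\<lambda>x. f x + g x) Y = restrict (\<lambda>x. p x + q x) Y" unfolding pq by (rule ext) simp
  then show ?thesis using cr_poly[OF poly_fun.pf_add[OF pq(1) pq(3)]] by simp
qed

lemma cr_mul: "f \<in> coord_ring Y \<Longrightarrow> g \<in> coord_ring Y \<Longrightarrow> restrict (\<lambda>x. f x * g x) Y \<in> coord_ring Y"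
proof -
  assume "f \<in> coord_ring Y" "g \<in> coord_ring Y"
  then obtain p q where pq: "poly_fun p" "f = restrict p Y" "poly_fun q" "g = restrict q Y"
    by (metis cr_E)
  have "restrict (\<lambda>x. f x * g x) Y = restrict (\<lambda>x. p x * q x) Y" unfolding pq by (rule ext) simp
  then show ?thesis using cr_poly[OF poly_fun.pf_mult[OF pq(1) pq(3)]] by simp
qed

lemma cr_res: "K \<subseteq> X \<Longrightarrow> f \<in> coord_ring X \<Longrightarrow> restrict f K \<in> coord_ring K"
proof -
  assume K: "K \<subseteq> X" and "f \<in> coord_ring X"
  then obtain p where p: "poly_fun p" "f = restrict p X" by (metis cr_E)
  have "restrict f K = restrict p K" unfolding p using K by (intro ext) auto
  then show ?thesis using cr_poly[OF p(1)] by simp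
qed

lemma ci_sub: "coord_ideal Y I \<Longrightarrow> I \<subseteq> coord_ring Y" unfolding coord_ideal_def by blast
lemma ci_zero: "coord_ideal Y I \<Longrightarrow> coord_zero Y \<in> I" unfolding coord_ideal_def by blast
lemma ci_add: "coord_ideal Y I \<Longrightarrow> f \<in> I \<Longrightarrow> h \<in> I \<Longrightarrow> restrict (\<lambda>x. f x + h x) Y \<in> I"
  unfolding coord_ideal_def by blast
lemma ci_mul: "coord_ideal Y I \<Longrightarrow> f \<in> I \<Longrightarrow> h \<in> coord_ring Y \<Longrightarrow> restrict (\<lambda>x. h x * f x) Y \<in> I"
  unfolding coord_ideal_def by blast

lemma ci_nonzero: "coord_ideal Y I \<Longrightarrow> I \<noteq> {coord_zero Y} \<Longrightarrow> \<exists>f\<in>I. f \<noteq> coord_zero Y"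
  using ci_zero by blast

context act_setting
begin

lemma comp_complement:
  assumes K: "irreducible_component X K"
  obtains D t z1 where "zariski_closed D" "X = K \<union> D" "D \<subseteq> X"
    "\<forall>g\<in>carrier G. \<forall>y\<in>D. a g y \<in> D" "poly_fun t" "\<forall>y\<in>D. t y = 0" "z1 \<in> K" "t z1 \<noteq> 0"
proof -
  define \<K> where "\<K> = {K. irreducible_component X K}"
  have finK: "finite \<K>" unfolding \<K>_def using comps(1)[OF clX] .
  have UK: "\<Union>\<K> = X" unfolding \<K>_def using comps(2)[OF clX] .
  have KX: "K \<subseteq> X" "zariski_closed K" "zariski_irreducible K"
    and Kmax: "\<And>D. D \<subseteq> X \<and> zariski_closed D \<and> zariski_irreducible D \<and> K \<subseteq> D \<Longrightarrow> D = K"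
    using K unfolding irreducible_component_def by blast+
  have cK: "\<forall>C\<in>\<K>. zariski_closed C \<and> zariski_irreducible C \<and> C \<subseteq> X"
    unfolding \<K>_def irreducible_component_def by blast
  define D where "D = \<Union>(\<K> - {K})"
  have clD: "zariski_closed D" unfolding D_def using finK cK by (intro closed_Union) auto
  have XKD: "X = K \<union> D" unfolding D_def using UK KX(1) by blast
  have DX: "D \<subseteq> X" unfolding D_def using cK by blast
  have stD: "\<forall>g\<in>carrier G. \<forall>y\<in>D. a g y \<in> D"
  proof (intro ballI)
    fix g y assume g: "g \<in> carrier G" and "y \<in> D"
    then obtain K' where K': "K' \<in> \<K>" "K' \<noteq> K" "y \<in> K'" unfolding D_def by blast
    then have "a g y \<in> K'" using comp_stable[OF _ g] unfolding \<K>_def by blast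
    then show "a g y \<in> D" using K' unfolding D_def by blast
  qed
  have nKD: "\<not> K \<subseteq> D"
  proof
    assume "K \<subseteq> D"
    then obtain K' where K': "K' \<in> \<K> - {K}" "K \<subseteq> K'"
      using irr_sub_Union[of "\<K> - {K}" K] finK KX(3) cK unfolding D_def by blast
    then have "K' = K" using Kmax cK by blast
    then show False using K' by blast
  qed
  obtain T where T: "\<forall>p\<in>T. poly_fun p" "D = zset T" using clD by (rule closedE)
  obtain z1 where z1: "z1 \<in> K" "z1 \<notin> D" using nKD by blast
  then obtain t where t: "t \<in> T" "t z1 \<noteq> 0" using T(2) by blast
  have tD: "\<forall>y\<in>D. t y = 0" using T(2) t(1) by blast
  have tp: "poly_fun t" using T(1) t(1) by blast
  show ?thesis by (rule that[of D t z1, OF clD XKD DX stD tp tD z1(1) t(2)])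
qed

lemma tr_cr:
  assumes g: "g \<in> carrier G" and f: "f \<in> coord_ring X"
  shows "translate_fun G X a g f \<in> coord_ring X"
proof -
  obtain p where p: "poly_fun p" "f = restrict p X" using f by (rule cr_E)
  have gi: "inv\<^bsub>G\<^esub> g \<in> carrier G" using inv_closed[OF g] .
  obtain P where P: "\<forall>j. poly_fun (P j)" "\<forall>x\<in>X. a (inv\<^bsub>G\<^esub> g) x = (\<lambda>j. P j x)"
    using gi by (rule act_polyX)
  have "translate_fun G X a g f = restrict (\<lambda>y. p (\<lambda>j. P j y)) X"
    unfolding translate_fun_def p(2)
  proof (rule ext)
    fix y show "restrict (\<lambda>y. restrict p X (a (inv\<^bsub>G\<^esub> g) y)) X y = restrict (\<lambda>y. p (\<lambda>j. P j y)) X y"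
      using act_closed[OF gi] P(2) by auto
  qed
  then show ?thesis using cr_poly[OF pf_comp[OF p(1) P(1)]] by simp
qed

lemma tr_res:
  assumes g: "g \<in> carrier G" and KX: "K \<subseteq> X" and st: "\<forall>y\<in>K. a (inv\<^bsub>G\<^esub> g) y \<in> K"
  shows "translate_fun G K a g (restrict F K) = restrict (translate_fun G X a g F) K"
  unfolding translate_fun_def
proof (rule ext)
  fix y show "restrict (\<lambda>y. restrict F K (a (inv\<^bsub>G\<^esub> g) y)) K y =
      restrict (restrict (\<lambda>y. F (a (inv\<^bsub>G\<^esub> g) y)) X) K y"
    using st KX by auto
qed

lemma tr_zero:
  assumes g: "g \<in> carrier G" and st: "\<forall>y\<in>Y. a (inv\<^bsub>G\<^esub> g) y \<in> Y"
  shows "translate_fun G Y a g (coord_zero Y) = coord_zero Y"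
  unfolding translate_fun_def coord_zero_def
proof (rule ext)
  fix y show "restrict (\<lambda>y. restrict (\<lambda>x. 0) Y (a (inv\<^bsub>G\<^esub> g) y)) Y y = restrict (\<lambda>x. 0) Y y"
    using st by auto
qed

lemma zero_inv:
  assumes I: "coord_ideal Y I" and st: "\<forall>g\<in>carrier G. \<forall>y\<in>Y. a g y \<in> Y"
  shows "coord_zero Y \<in> invariants G Y a I"
  unfolding invariants_def
proof (intro CollectI conjI ballI)
  show "coord_zero Y \<in> I" using ci_zero[OF I] .
  fix g assume g: "g \<in> carrier G"
  have "\<forall>y\<in>Y. a (inv\<^bsub>G\<^esub> g) y \<in> Y" using st inv_closed[OF g] by blast
  then show "translate_fun G Y a g (coord_zero Y) = coord_zero Y" by (rule tr_zero[OF g])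
qed

end


context act_setting
begin

lemma obs_down:
  assumes obs: "observable G X a" and K: "irreducible_component X K"
  shows "observable G K a"
  unfolding observable_def
proof (intro allI impI)
  fix J assume "coord_ideal K J \<and> G_stable G K a J \<and> J \<noteq> {coord_zero K}"
  then have Jid: "coord_ideal K J" and Jst: "G_stable G K a J" and Jnz: "J \<noteq> {coord_zero K}" by auto
  obtain D t z1 where D: "zariski_closed D" "X = K \<union> D" "D \<subseteq> X"
    "\<forall>g\<in>carrier G. \<forall>y\<in>D. a g y \<in> D" "poly_fun t" "\<forall>y\<in>D. t y = 0" "z1 \<in> K" "t z1 \<noteq> 0"
    using K by (rule comp_complement)
  have KX: "K \<subseteq> X" and Kirr: "zariski_irreducible K" using K unfolding irreducible_component_def by blast+
  have stK: "\<forall>g\<in>carrier G. \<forall>y\<in>K. a g y \<in> K" using comp_stable[OF K] by blast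
  obtain j where j: "j \<in> J" "j \<noteq> coord_zero K" using ci_nonzero[OF Jid Jnz] by blast
  have jcr: "j \<in> coord_ring K" using ci_sub[OF Jid] j(1) by blast
  obtain q where q: "poly_fun q" "j = restrict q K" using jcr by (rule cr_E)
  obtain z0 where z0: "z0 \<in> K" "j z0 \<noteq> 0" using cr_nonzero[OF jcr j(2)] by blast
  have qz0: "q z0 \<noteq> 0" using z0 q(2) by simp
  obtain z where z: "z \<in> K" "t z * q z \<noteq> 0"
    using irr_prod[OF Kirr D(5) q(1) D(7) D(8) z0(1) qz0] by blast
  define I where "I = {F \<in> coord_ring X. restrict F K \<in> J \<and> (\<forall>y\<in>D. F y = 0)}"
  have Iid: "coord_ideal X I"
    unfolding coord_ideal_def
  proof (intro conjI ballI)
    show "I \<subseteq> coord_ring X" unfolding I_def by blast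
    have "restrict (coord_zero X) K = coord_zero K"
      unfolding coord_zero_def using KX by (intro ext) auto
    then show "coord_zero X \<in> I" unfolding I_def using cr_zero ci_zero[OF Jid] D(3)
      by (auto simp: coord_zero_def)
  next
    fix f h assume f: "f \<in> I" and h: "h \<in> I"
    have "restrict (restrict (\<lambda>x. f x + h x) X) K = restrict (\<lambda>x. restrict f K x + restrict h K x) K"
      using KX by (intro ext) auto
    moreover have "restrict (\<lambda>x. restrict f K x + restrict h K x) K \<in> J"
      using ci_add[OF Jid] f h unfolding I_def by blast
    moreover have "restrict (\<lambda>x. f x + h x) X \<in> coord_ring X"
      using cr_add f h unfolding I_def by blast
    moreover have "\<forall>y\<in>D. restrict (\<lambda>x. f x + h x) X y = 0" using f h D(3) unfolding I_def by auto
    ultimately show "restrict (\<lambda>x. f x + h x) X \<in> I" unfolding I_def by simp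
  next
    fix f h assume f: "f \<in> I" and h: "h \<in> coord_ring X"
    have "restrict (restrict (\<lambda>x. h x * f x) X) K = restrict (\<lambda>x. restrict h K x * restrict f K x) K"
      using KX by (intro ext) auto
    moreover have "restrict (\<lambda>x. restrict h K x * restrict f K x) K \<in> J"
      using ci_mul[OF Jid] cr_res[OF KX h] f unfolding I_def by blast
    moreover have "restrict (\<lambda>x. h x * f x) X \<in> coord_ring X"
      using cr_mul h f unfolding I_def by blast
    moreover have "\<forall>y\<in>D. restrict (\<lambda>x. h x * f x) X y = 0" using f D(3) unfolding I_def by auto
    ultimately show "restrict (\<lambda>x. h x * f x) X \<in> I" unfolding I_def by simp
  qed
  have Ist: "G_stable G X a I"
    unfolding G_stable_def
  proof (intro ballI)
    fix g F assume g: "g \<in> carrier G" and F: "F \<in> I"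
    have gi: "inv\<^bsub>G\<^esub> g \<in> carrier G" using inv_closed[OF g] .
    have stKi: "\<forall>y\<in>K. a (inv\<^bsub>G\<^esub> g) y \<in> K" using stK gi by blast
    have "translate_fun G X a g F \<in> coord_ring X" using tr_cr[OF g] F unfolding I_def by blast
    moreover have "restrict (translate_fun G X a g F) K \<in> J"
    proof -
      have "translate_fun G K a g (restrict F K) \<in> J"
        using Jst g F unfolding G_stable_def I_def by blast
      then show ?thesis using tr_res[OF g KX stKi] by simp
    qed
    moreover have "\<forall>y\<in>D. translate_fun G X a g F y = 0"
      using F D(3) D(4) gi unfolding I_def translate_fun_def by auto
    ultimately show "translate_fun G X a g F \<in> I" unfolding I_def by simp
  qed
  have Inz: "I \<noteq> {coord_zero X}"
  proof -
    define F0 where "F0 = restrict (\<lambda>x. t x * q x) X"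
    have "F0 \<in> coord_ring X" unfolding F0_def by (rule cr_poly[OF poly_fun.pf_mult[OF D(5) q(1)]])
    moreover have "restrict F0 K \<in> J"
    proof -
      have "restrict F0 K = restrict (\<lambda>x. restrict t K x * j x) K"
        unfolding F0_def q(2) using KX by (intro ext) auto
      then show ?thesis using ci_mul[OF Jid j(1) cr_poly[OF D(5)]] by simp
    qed
    moreover have "\<forall>y\<in>D. F0 y = 0" unfolding F0_def using D(3) D(6) by auto
    ultimately have "F0 \<in> I" unfolding I_def by simp
    moreover have "F0 \<noteq> coord_zero X"
    proof
      assume "F0 = coord_zero X"
      then have "F0 z = coord_zero X z" by simp
      then show False using z KX unfolding F0_def coord_zero_def by auto
    qed
    ultimately show ?thesis by blast
  qed
  have "invariants G X a I \<noteq> {coord_zero X}" using obs Iid Ist Inz unfolding observable_def by blast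
  moreover have "coord_zero X \<in> invariants G X a I" using zero_inv[OF Iid] act_closed by blast
  ultimately obtain F where F: "F \<in> invariants G X a I" "F \<noteq> coord_zero X" by blast
  have FI: "F \<in> coord_ring X" "restrict F K \<in> J" "\<forall>y\<in>D. F y = 0"
    and Finv: "\<forall>g\<in>carrier G. translate_fun G X a g F = F"
    using F(1) unfolding invariants_def I_def by auto
  have "restrict F K \<in> invariants G K a J"
    unfolding invariants_def
  proof (intro CollectI conjI ballI)
    show "restrict F K \<in> J" by (rule FI(2))
    fix g assume g: "g \<in> carrier G"
    have stKi: "\<forall>y\<in>K. a (inv\<^bsub>G\<^esub> g) y \<in> K" using stK inv_closed[OF g] by blast
    show "translate_fun G K a g (restrict F K) = restrict F K"
      using tr_res[OF g KX stKi] Finv g by simp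
  qed
  moreover have "restrict F K \<noteq> coord_zero K"
  proof
    assume a0: "restrict F K = coord_zero K"
    obtain y where y: "y \<in> X" "F y \<noteq> 0" using cr_nonzero[OF FI(1) F(2)] by blast
    then have "y \<in> K" using D(2) FI(3) by blast
    then have "restrict F K y = coord_zero K y" using a0 by simp
    then show False using y \<open>y \<in> K\<close> unfolding coord_zero_def by simp
  qed
  ultimately show "invariants G K a J \<noteq> {coord_zero K}" by blast
qed

lemma obs_up:
  assumes obsK: "\<forall>K. irreducible_component X K \<longrightarrow> observable G K a"
  shows "observable G X a"
  unfolding observable_def
proof (intro allI impI)
  fix I assume "coord_ideal X I \<and> G_stable G X a I \<and> I \<noteq> {coord_zero X}"
  then have Iid: "coord_ideal X I" and Ist: "G_stable G X a I" and Inz: "I \<noteq> {coord_zero X}" by auto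
  obtain f where f: "f \<in> I" "f \<noteq> coord_zero X" using ci_nonzero[OF Iid Inz] by blast
  have fcr: "f \<in> coord_ring X" using ci_sub[OF Iid] f(1) by blast
  obtain p where p: "poly_fun p" "f = restrict p X" using fcr by (rule cr_E)
  obtain x0 where x0: "x0 \<in> X" "f x0 \<noteq> 0" using cr_nonzero[OF fcr f(2)] by blast
  have px0: "p x0 \<noteq> 0" using x0 p(2) by simp
  obtain K where K: "irreducible_component X K" "x0 \<in> K" using comps(2)[OF clX] x0(1) by blast
  obtain D t z1 where D: "zariski_closed D" "X = K \<union> D" "D \<subseteq> X"
    "\<forall>g\<in>carrier G. \<forall>y\<in>D. a g y \<in> D" "poly_fun t" "\<forall>y\<in>D. t y = 0" "z1 \<in> K" "t z1 \<noteq> 0"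
    using K(1) by (rule comp_complement)
  have KX: "K \<subseteq> X" and Kirr: "zariski_irreducible K" using K(1) unfolding irreducible_component_def by blast+
  have stK: "\<forall>g\<in>carrier G. \<forall>y\<in>K. a g y \<in> K" using comp_stable[OF K(1)] by blast
  obtain z where z: "z \<in> K" "t z * p z \<noteq> 0"
    using irr_prod[OF Kirr D(5) p(1) D(7) D(8) K(2) px0] by blast
  define J where "J = {\<phi>. \<exists>F. F \<in> I \<and> (\<forall>y\<in>D. F y = 0) \<and> \<phi> = restrict F K}"
  have Jid: "coord_ideal K J"
    unfolding coord_ideal_def
  proof (intro conjI ballI)
    show "J \<subseteq> coord_ring K" unfolding J_def using cr_res[OF KX] ci_sub[OF Iid] by blast
    have "restrict (coord_zero X) K = coord_zero K"
      unfolding coord_zero_def using KX by (intro ext) auto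
    moreover have "\<forall>y\<in>D. coord_zero X y = 0" using D(3) unfolding coord_zero_def by auto
    ultimately show "coord_zero K \<in> J" unfolding J_def using ci_zero[OF Iid]
      by (intro CollectI exI[of _ "coord_zero X"]) simp
  next
    fix \<phi>1 \<phi>2 assume "\<phi>1 \<in> J" "\<phi>2 \<in> J"
    then obtain F1 F2 where F: "F1 \<in> I" "\<forall>y\<in>D. F1 y = 0" "\<phi>1 = restrict F1 K"
      "F2 \<in> I" "\<forall>y\<in>D. F2 y = 0" "\<phi>2 = restrict F2 K" unfolding J_def by blast
    have "restrict (\<lambda>x. \<phi>1 x + \<phi>2 x) K = restrict (restrict (\<lambda>x. F1 x + F2 x) X) K"
      unfolding F(3) F(6) using KX by (intro ext) auto
    moreover have "restrict (\<lambda>x. F1 x + F2 x) X \<in> I" using ci_add[OF Iid F(1) F(4)] .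
    moreover have "\<forall>y\<in>D. restrict (\<lambda>x. F1 x + F2 x) X y = 0" using F(2) F(5) D(3) by auto
    ultimately show "restrict (\<lambda>x. \<phi>1 x + \<phi>2 x) K \<in> J" unfolding J_def by blast
  next
    fix \<phi> h assume "\<phi> \<in> J" and h: "h \<in> coord_ring K"
    then obtain F where F: "F \<in> I" "\<forall>y\<in>D. F y = 0" "\<phi> = restrict F K" unfolding J_def by blast
    obtain s where s: "poly_fun s" "h = restrict s K" using h by (rule cr_E)
    have "restrict (\<lambda>x. h x * \<phi> x) K = restrict (restrict (\<lambda>x. restrict s X x * F x) X) K"
      unfolding F(3) s(2) using KX by (intro ext) auto
    moreover have "restrict (\<lambda>x. restrict s X x * F x) X \<in> I" using ci_mul[OF Iid F(1) cr_poly[OF s(1)]] .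
    moreover have "\<forall>y\<in>D. restrict (\<lambda>x. restrict s X x * F x) X y = 0" using F(2) D(3) by auto
    ultimately show "restrict (\<lambda>x. h x * \<phi> x) K \<in> J" unfolding J_def by blast
  qed
  have Jst: "G_stable G K a J"
    unfolding G_stable_def
  proof (intro ballI)
    fix g \<phi> assume g: "g \<in> carrier G" and "\<phi> \<in> J"
    then obtain F where F: "F \<in> I" "\<forall>y\<in>D. F y = 0" "\<phi> = restrict F K" unfolding J_def by blast
    have gi: "inv\<^bsub>G\<^esub> g \<in> carrier G" using inv_closed[OF g] .
    have stKi: "\<forall>y\<in>K. a (inv\<^bsub>G\<^esub> g) y \<in> K" using stK gi by blast
    have "translate_fun G K a g \<phi> = restrict (translate_fun G X a g F) K"
      unfolding F(3) by (rule tr_res[OF g KX stKi])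
    moreover have "translate_fun G X a g F \<in> I" using Ist g F(1) unfolding G_stable_def by blast
    moreover have "\<forall>y\<in>D. translate_fun G X a g F y = 0"
      using F(2) D(3) D(4) gi unfolding translate_fun_def by auto
    ultimately show "translate_fun G K a g \<phi> \<in> J" unfolding J_def by blast
  qed
  have Jnz: "J \<noteq> {coord_zero K}"
  proof -
    define F0 where "F0 = restrict (\<lambda>x. restrict t X x * f x) X"
    have "F0 \<in> I" unfolding F0_def by (rule ci_mul[OF Iid f(1) cr_poly[OF D(5)]])
    moreover have "\<forall>y\<in>D. F0 y = 0" unfolding F0_def using D(3) D(6) by auto
    ultimately have "restrict F0 K \<in> J" unfolding J_def by blast
    moreover have "restrict F0 K \<noteq> coord_zero K"
    proof
      assume "restrict F0 K = coord_zero K"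
      then have "restrict F0 K z = coord_zero K z" by simp
      then show False using z KX p(2) unfolding F0_def coord_zero_def by auto
    qed
    ultimately show ?thesis by blast
  qed
  have "invariants G K a J \<noteq> {coord_zero K}"
    using obsK K(1) Jid Jst Jnz unfolding observable_def by blast
  moreover have "coord_zero K \<in> invariants G K a J" using zero_inv[OF Jid stK] .
  ultimately obtain \<phi> where \<phi>: "\<phi> \<in> invariants G K a J" "\<phi> \<noteq> coord_zero K" by blast
  have \<phi>J: "\<phi> \<in> J" and \<phi>inv: "\<forall>g\<in>carrier G. translate_fun G K a g \<phi> = \<phi>"
    using \<phi>(1) unfolding invariants_def by auto
  obtain F where F: "F \<in> I" "\<forall>y\<in>D. F y = 0" "\<phi> = restrict F K" using \<phi>J unfolding J_def by blast
  have Fcr: "F \<in> coord_ring X" using ci_sub[OF Iid] F(1) by blast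
  have "F \<in> invariants G X a I"
    unfolding invariants_def
  proof (intro CollectI conjI ballI)
    show "F \<in> I" by (rule F(1))
    fix g assume g: "g \<in> carrier G"
    have gi: "inv\<^bsub>G\<^esub> g \<in> carrier G" using inv_closed[OF g] .
    show "translate_fun G X a g F = F"
    proof (rule cr_eqI[OF tr_cr[OF g Fcr] Fcr])
      fix y assume y: "y \<in> X"
      show "translate_fun G X a g F y = F y"
      proof (cases "y \<in> K")
        case True
        have yi: "a (inv\<^bsub>G\<^esub> g) y \<in> K" using stK gi True by blast
        have "translate_fun G K a g \<phi> y = \<phi> y" using \<phi>inv g by simp
        then show ?thesis using True yi y unfolding F(3) translate_fun_def by simp
      next
        case False
        then have yD: "y \<in> D" using y D(2) by blast
        then have "a (inv\<^bsub>G\<^esub> g) y \<in> D" using D(4) gi by blast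
        then show ?thesis using yD y F(2) unfolding translate_fun_def by simp
      qed
    qed
  qed
  moreover have "F \<noteq> coord_zero X"
  proof
    assume a0: "F = coord_zero X"
    have \<phi>cr: "\<phi> \<in> coord_ring K" using ci_sub[OF Jid] \<phi>J by blast
    obtain y where y: "y \<in> K" "\<phi> y \<noteq> 0" using cr_nonzero[OF \<phi>cr \<phi>(2)] by blast
    then show False using a0 KX unfolding F(3) coord_zero_def by auto
  qed
  ultimately show "invariants G X a I \<noteq> {coord_zero X}" by blast
qed

end

theorem lemma3p1:
  fixes G :: "('u::finite \<Rightarrow> 'k::field) monoid"
    and X :: "('v::finite \<Rightarrow> 'k) set"
    and a :: "('u \<Rightarrow> 'k) \<Rightarrow> ('v \<Rightarrow> 'k) \<Rightarrow> ('v \<Rightarrow> 'k)"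
  assumes "alg_closed TYPE('k)"
    and "affine_algebraic_group G"
    and "zariski_connected (carrier G)"
    and "zariski_closed X"
    and "algebraic_action G X a"
  shows "observable G X a \<longleftrightarrow> (\<forall>C. irreducible_component X C \<longrightarrow> observable G C a)"
proof -
  interpret act_setting G X a
    using assms unfolding act_setting_def affine_algebraic_group_def by blast
  show ?thesis using obs_down obs_up by blast
qed

end
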